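(* Let $\mathcal I$ be a finite set of agents, $H\in(\tfrac12,1)$, $b_1,x_0\in\mathbb{R}$, and for each $j\in\mathcal I$ let $b_{2j}\in\mathbb{R}\setminus\{0\}$, $q_j>0$, $r_j>0$. Agents use controls $u_j(t)=K_jx(t)$, $K_j\in\mathbb{R}$, where the common state solves $$x(t)=x_0+\int_0^t\Big(b_1x(t')+\sum_{j\in\mathcal I}b_{2j}u_j(t')\Big)dt'+R^H(t),$$ $R^H$ being a Rosenblatt process of Hurst index $H$, and agent $i$'s cost (to be minimized) is $L_{i,\infty}(u)=\limsup_{T\to\infty}\frac1T\mathbb{E}\int_0^T\big(q_ix^2(t)+r_iu_i^2(t)\big)dt$, with admissible set $\mathcal U_i=\{u_i(t)=K_ix(t):K_i\in\mathbb{R},\ b_1+\sum_{j\in\mathcal I}b_{2j}K_j<0\}$. If there exists $(K_i)_{i\in\mathcal I}$ solving, for all $i\in\mathcal I$, $$K_i=-\frac{b_1+\sum_{j\in\mathcal I\setminus\{i\}}b_{2j}K_j+\sqrt{\big(b_1+\sum_{j\in\mathcal I\setminus\{i\}}b_{2j}K_j\big)^2+4H(1-H)\frac{b_{2i}^2q_i}{r_i}}}{2b_{2i}(1-H)},$$ together with $b_1+\sum_{j\in\mathcal I}b_{2j}K_j<0$, then this non-zero-sum stochastic differential game has an equilibrium in stationary linear state-feedback strategies (within the classes $\mathcal U_i$).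
   Context: The Rosenblatt process with Hurst index $H\in(\tfrac12,1)$ is $R^H(t)=C_R^H\int_{\mathbb{R}^2}\Big(\int_0^t(u-y_1)_+^{\frac H2-1}(u-y_2)_+^{\frac H2-1}du\Big)\,dW(y_1)\,dW(y_2)$, a double Wiener–Itô integral with respect to a two-sided standard Brownian motion $W$, where $C_R^H>0$ normalizes $\mathbb{E}[R^H(1)^2]=1$; it is centered, self-similar of index $H$, non-Gaussian, with continuous paths. Integrals against $R^H$ of deterministic smooth integrands are defined pathwise by integration by parts. *)

theory Defs
  imports "HOL-Probability.Probability"
begin

text \<open>We assume instead the properties of a
Rosenblatt process R^H on a probability space M that the statement relies on:
measurable, R(0)=0, continuous paths on [0,oo), square integrable, centred, with the
fractional covariance E[R(s)R(t)] = (s^(2H) + t^(2H) - |t-s|^(2H))/2.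
Every Rosenblatt process satisfies these.\<close>
definition rosenblatt_second_order :: "'w measure \<Rightarrow> real \<Rightarrow> (real \<Rightarrow> 'w \<Rightarrow> real) \<Rightarrow> bool" where
  "rosenblatt_second_order M H R \<longleftrightarrow>
     (\<forall>t. R t \<in> borel_measurable M) \<and>
     (\<forall>\<omega>\<in>space M. R 0 \<omega> = 0 \<and> continuous_on {0..} (\<lambda>t. R t \<omega>)) \<and>
     (\<forall>t\<ge>0. integrable M (\<lambda>\<omega>. (R t \<omega>)\<^sup>2)) \<and>
     (\<forall>t\<ge>0. (\<integral>\<omega>. R t \<omega> \<partial>M) = 0) \<and>
     (\<forall>s\<ge>0. \<forall>t\<ge>0. (\<integral>\<omega>. R s \<omega> * R t \<omega> \<partial>M)
         = (s powr (2*H) + t powr (2*H) - \<bar>t - s\<bar> powr (2*H)) / 2)"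

definition admissible_gains :: "'i set \<Rightarrow> real \<Rightarrow> ('i \<Rightarrow> real) \<Rightarrow> ('i \<Rightarrow> real) \<Rightarrow> bool" where
  "admissible_gains I b1 b2 K \<longleftrightarrow> b1 + (\<Sum>j\<in>I. b2 j * K j) < 0"

definition state_solution ::
  "'w measure \<Rightarrow> (real \<Rightarrow> 'w \<Rightarrow> real) \<Rightarrow> 'i set \<Rightarrow> real \<Rightarrow> ('i \<Rightarrow> real) \<Rightarrow> real
   \<Rightarrow> ('i \<Rightarrow> real) \<Rightarrow> (real \<Rightarrow> 'w \<Rightarrow> real) \<Rightarrow> bool" where
  "state_solution M R I b1 b2 x0 K x \<longleftrightarrow>
     (\<forall>\<omega>\<in>space M. \<forall>t\<ge>0.
        (\<lambda>s. x s \<omega>) integrable_on {0..t} \<and>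
        x t \<omega> = x0 + integral {0..t} (\<lambda>s. b1 * x s \<omega> + (\<Sum>j\<in>I. b2 j * (K j * x s \<omega>)))
                 + R t \<omega>)"

text \<open>Long-run average cost of agent i:
limsup_{T->oo} (1/T) E int_0^T (q_i x^2 + r_i u_i^2) dt (nonnegative integrand, so
taken in ennreal).\<close>
definition avg_cost ::
  "'w measure \<Rightarrow> ('i \<Rightarrow> real) \<Rightarrow> ('i \<Rightarrow> real) \<Rightarrow> 'i \<Rightarrow> ('i \<Rightarrow> real)
   \<Rightarrow> (real \<Rightarrow> 'w \<Rightarrow> real) \<Rightarrow> ennreal" where
  "avg_cost M q r i K x =
     Limsup at_top (\<lambda>T::real. ennreal (1 / T) *
       (\<integral>\<^sup>+ \<omega>. (\<integral>\<^sup>+ t\<in>{0..T}. ennreal (q i * (x t \<omega>)\<^sup>2 + r i * (K i * x t \<omega>)\<^sup>2) \<partial>lborel) \<partial>M))"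

definition linear_feedback_equilibrium ::
  "'w measure \<Rightarrow> (real \<Rightarrow> 'w \<Rightarrow> real) \<Rightarrow> 'i set \<Rightarrow> real \<Rightarrow> ('i \<Rightarrow> real) \<Rightarrow> real
   \<Rightarrow> ('i \<Rightarrow> real) \<Rightarrow> ('i \<Rightarrow> real) \<Rightarrow> ('i \<Rightarrow> real) \<Rightarrow> bool" where
  "linear_feedback_equilibrium M R I b1 b2 x0 q r K \<longleftrightarrow>
     admissible_gains I b1 b2 K \<and>
     (\<exists>x. state_solution M R I b1 b2 x0 K x) \<and>
     (\<forall>i\<in>I. \<forall>k::real. admissible_gains I b1 b2 (K(i := k)) \<longrightarrow>
        (\<forall>x y. state_solution M R I b1 b2 x0 K x \<longrightarrow>
               state_solution M R I b1 b2 x0 (K(i := k)) y \<longrightarrow>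
               avg_cost M q r i K x \<le> avg_cost M q r i (K(i := k)) y))"

end

theory Submission
  imports Defs
begin

lemma jm:
  fixes f :: "real \<Rightarrow> 'w \<Rightarrow> real"
  assumes meas: "\<And>t. t \<ge> 0 \<Longrightarrow> f t \<in> borel_measurable M"
    and cont: "\<And>\<omega> b. \<omega> \<in> space M \<Longrightarrow> b \<ge> 0 \<Longrightarrow> continuous_on {0..b} (\<lambda>t. f t \<omega>)"
  shows "(\<lambda>(\<omega>,s). f (max 0 s) \<omega>) \<in> borel_measurable (M \<Otimes>\<^sub>M lborel)"
proof (rule borel_measurable_LIMSEQ_real[where u="\<lambda>n z. f (max 0 (real_of_int \<lfloor>real (Suc n) * snd z\<rfloor> / real (Suc n))) (fst z)"])
  fix n
  let ?g = "\<lambda>z::'w\<times>real. \<lfloor>real (Suc n) * snd z\<rfloor>"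
  have g: "?g \<in> measurable (M \<Otimes>\<^sub>M lborel) (count_space UNIV)"
    by (rule measurable_compose[OF _ measurable_real_floor]) simp
  have fi: "(\<lambda>z. f (max 0 (real_of_int i / real (Suc n))) (fst z)) \<in> borel_measurable (M \<Otimes>\<^sub>M lborel)" for i :: int
    by (rule measurable_compose[OF measurable_fst meas]) simp
  show "(\<lambda>z. f (max 0 (real_of_int \<lfloor>real (Suc n) * snd z\<rfloor> / real (Suc n))) (fst z)) \<in> borel_measurable (M \<Otimes>\<^sub>M lborel)"
    using measurable_compose_countable[OF fi g] .
next
  fix z :: "'w \<times> real" assume z: "z \<in> space (M \<Otimes>\<^sub>M lborel)"
  obtain \<omega> s where zz: "z = (\<omega>, s)" by (cases z)
  have \<omega>: "\<omega> \<in> space M" using z zz by (simp add: space_pair_measure)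
  show "(\<lambda>n. f (max 0 (real_of_int \<lfloor>real (Suc n) * snd z\<rfloor> / real (Suc n))) (fst z)) \<longlonglongrightarrow> (case z of (\<omega>, s) \<Rightarrow> f (max 0 s) \<omega>)"
  proof (cases "s < 0")
    case True
    have "real_of_int \<lfloor>real (Suc n) * s\<rfloor> / real (Suc n) \<le> 0" for n
    proof -
      have "real (Suc n) * s < 0" using True by (simp add: mult_pos_neg)
      then have "real_of_int \<lfloor>real (Suc n) * s\<rfloor> \<le> 0" by linarith
      then show ?thesis by (simp add: divide_nonpos_pos)
    qed
    then have "max 0 (real_of_int \<lfloor>real (Suc n) * s\<rfloor> / real (Suc n)) = 0" for n by simp
    then show ?thesis using True zz by simp
  next
    case False
    let ?a = "\<lambda>n. real_of_int \<lfloor>real (Suc n) * s\<rfloor> / real (Suc n)"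
    have up: "?a n \<le> s" for n
      by (simp add: divide_le_eq mult.commute)
    have lo: "s - inverse (real (Suc n)) \<le> ?a n" for n
    proof -
      have h: "real (Suc n) * s - 1 \<le> real_of_int \<lfloor>real (Suc n) * s\<rfloor>" by linarith
      have "s - inverse (real (Suc n)) = (real (Suc n) * s - 1) / real (Suc n)"
        by (simp add: field_simps)
      also have "\<dots> \<le> ?a n" by (rule divide_right_mono[OF h]) simp
      finally show ?thesis .
    qed
    have nn: "0 \<le> ?a n" for n using False by simp
    have lim: "?a \<longlonglongrightarrow> s"
    proof (rule tendsto_sandwich[OF _ _ _ tendsto_const])
      show "\<forall>\<^sub>F n in sequentially. s - inverse (real (Suc n)) \<le> ?a n" using lo by simp
      show "\<forall>\<^sub>F n in sequentially. ?a n \<le> s" using up by simp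
      show "(\<lambda>n. s - inverse (real (Suc n))) \<longlonglongrightarrow> s"
        using tendsto_diff[OF tendsto_const LIMSEQ_inverse_real_of_nat, of s] by simp
    qed
    have "(\<lambda>n. f (?a n) \<omega>) \<longlonglongrightarrow> f s \<omega>"
      by (rule continuous_on_tendsto_compose[OF cont[OF \<omega>, of s] lim]) (use False up nn in auto)
    then show ?thesis using False zz nn by (simp add: max_def)
  qed
qed

definition cov :: "real \<Rightarrow> real \<Rightarrow> real \<Rightarrow> real" where
  "cov H s t = (s powr (2*H) + t powr (2*H) - \<bar>t - s\<bar> powr (2*H)) / 2"

definition LI :: "real \<Rightarrow> (real \<Rightarrow> real) \<Rightarrow> real" where
  "LI t f = (\<integral>s. indicator {0..t} s * f s \<partial>lborel)"

lemma cov_sym: "cov H s t = cov H t s"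
  unfolding cov_def by (simp add: abs_minus_commute)

lemma cov_diag: "cov H t t = t powr (2*H)"
  unfolding cov_def by simp

lemma LI_cong: "(\<And>s. s \<in> {0..t} \<Longrightarrow> f s = g s) \<Longrightarrow> LI t f = LI t g"
  unfolding LI_def by (intro Bochner_Integration.integral_cong) (auto split: split_indicator)

context
  fixes M :: "'w measure" and H :: real and R :: "real \<Rightarrow> 'w \<Rightarrow> real"
  assumes P: "prob_space M" and Rs: "rosenblatt_second_order M H R"
begin

lemma R_meas: "R t \<in> borel_measurable M"
  using Rs unfolding rosenblatt_second_order_def by blast

lemma R_cont: "\<omega> \<in> space M \<Longrightarrow> continuous_on {0..} (\<lambda>t. R t \<omega>)"
  using Rs unfolding rosenblatt_second_order_def by blast

lemma R_zero: "\<omega> \<in> space M \<Longrightarrow> R 0 \<omega> = 0"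
  using Rs unfolding rosenblatt_second_order_def by blast

lemma R_cont': "\<omega> \<in> space M \<Longrightarrow> continuous_on {0..b} (\<lambda>t. R t \<omega>)"
  using R_cont by (rule continuous_on_subset) auto

lemma R_sq: "t \<ge> 0 \<Longrightarrow> integrable M (\<lambda>\<omega>. (R t \<omega>)\<^sup>2)"
  using Rs unfolding rosenblatt_second_order_def by blast

lemma R_mean: "t \<ge> 0 \<Longrightarrow> (\<integral>\<omega>. R t \<omega> \<partial>M) = 0"
  using Rs unfolding rosenblatt_second_order_def by blast

lemma R_cov: "s \<ge> 0 \<Longrightarrow> t \<ge> 0 \<Longrightarrow> (\<integral>\<omega>. R s \<omega> * R t \<omega> \<partial>M) = cov H s t"
  using Rs unfolding rosenblatt_second_order_def cov_def by blast

lemma R_var: "t \<ge> 0 \<Longrightarrow> (\<integral>\<omega>. (R t \<omega>)\<^sup>2 \<partial>M) = t powr (2*H)"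
  using R_cov[of t t] by (simp add: power2_eq_square cov_diag)

lemma R_joint: "(\<lambda>(\<omega>,s). R (max 0 s) \<omega>) \<in> borel_measurable (M \<Otimes>\<^sub>M lborel)"
  by (rule jm) (auto intro: R_cont' R_meas)

end

lemma L2_prod:
  fixes f g :: "'a \<Rightarrow> real"
  assumes [measurable]: "f \<in> borel_measurable M" "g \<in> borel_measurable M"
    and "integrable M (\<lambda>x. (f x)\<^sup>2)" "integrable M (\<lambda>x. (g x)\<^sup>2)"
  shows "integrable M (\<lambda>x. f x * g x)"
proof (rule Bochner_Integration.integrable_bound)
  show "integrable M (\<lambda>x. ((f x)\<^sup>2 + (g x)\<^sup>2) / 2)" using assms by simp
  show "AE x in M. norm (f x * g x) \<le> norm (((f x)\<^sup>2 + (g x)\<^sup>2) / 2)"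
  proof (rule AE_I2)
    fix x
    have "0 \<le> (\<bar>f x\<bar> - \<bar>g x\<bar>)\<^sup>2" by simp
    then show "norm (f x * g x) \<le> norm (((f x)\<^sup>2 + (g x)\<^sup>2) / 2)"
      by (simp add: power2_eq_square abs_mult algebra_simps)
  qed
qed simp


lemma bounded_on_Icc:
  fixes g :: "real \<Rightarrow> real"
  assumes "continuous_on UNIV g"
  obtains G where "G \<ge> 0" "\<And>s. s \<in> {0..t} \<Longrightarrow> \<bar>g s\<bar> \<le> G"
proof -
  have "compact (g ` {0..t})"
    by (rule compact_continuous_image[OF continuous_on_subset[OF assms] compact_Icc]) simp
  then obtain B where B: "\<forall>y\<in>g ` {0..t}. norm y \<le> B"
    using compact_imp_bounded bounded_iff by metis
  have "\<bar>g s\<bar> \<le> max 0 B" if "s \<in> {0..t}" for s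
  proof -
    have "norm (g s) \<le> B" using B that by blast
    then show ?thesis by simp
  qed
  then show ?thesis using that[of "max 0 B"] by simp
qed

lemma hk_cs:
  fixes f :: "real \<Rightarrow> real"
  assumes fc: "continuous_on {0..t} f" and t: "t \<ge> 0"
  shows "(integral {0..t} f)\<^sup>2 \<le> t * integral {0..t} (\<lambda>s. (f s)\<^sup>2)"
proof (cases "t = 0")
  case True then show ?thesis by simp
next
  case False
  with t have tp: "t > 0" by simp
  define I where "I = integral {0..t} f"
  define J where "J = integral {0..t} (\<lambda>s. (f s)\<^sup>2)"
  define m where "m = I / t"
  have f2c: "continuous_on {0..t} (\<lambda>s. (f s)\<^sup>2)" by (intro continuous_intros fc)
  have h1: "((\<lambda>s. (f s)\<^sup>2) has_integral J) {0..t}"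
    unfolding J_def by (rule integrable_integral[OF integrable_continuous_real[OF f2c]])
  have h0: "(f has_integral I) {0..t}"
    unfolding I_def by (rule integrable_integral[OF integrable_continuous_real[OF fc]])
  have h2: "((\<lambda>s. 2*m * f s) has_integral 2*m*I) {0..t}"
    by (rule has_integral_mult_right[OF h0])
  have h3: "((\<lambda>s. m\<^sup>2) has_integral t * m\<^sup>2) {0..t}"
    using has_integral_const_real[of "m\<^sup>2" 0 t] t by simp
  have "((\<lambda>s. (f s)\<^sup>2 - 2*m * f s + m\<^sup>2) has_integral J - 2*m*I + t * m\<^sup>2) {0..t}"
    by (intro has_integral_add has_integral_diff h1 h2 h3)
  moreover have "0 \<le> (f s)\<^sup>2 - 2*m * f s + m\<^sup>2" for s
  proof -
    have "0 \<le> (f s - m)\<^sup>2" by simp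
    then show ?thesis by (simp add: power2_eq_square algebra_simps)
  qed
  ultimately have "0 \<le> J - 2*m*I + t * m\<^sup>2" by (rule has_integral_nonneg)
  then have "0 \<le> t * (J - 2*m*I + t * m\<^sup>2)" using tp by simp
  also have "t * (J - 2*m*I + t * m\<^sup>2) = t * J - I\<^sup>2"
    using tp by (simp add: m_def field_simps power2_eq_square)
  finally show ?thesis unfolding I_def J_def by simp
qed

lemma LI_HK: "continuous_on {0..t} f \<Longrightarrow> LI t f = integral {0..t} f"
  using set_borel_integral_eq_integral(2)[OF borel_integrable_atLeastAtMost'[of 0 t f]]
  unfolding LI_def set_lebesgue_integral_def by simp

lemma LI_zero: "LI t (\<lambda>s. 0) = 0"
  unfolding LI_def by simp

definition Phi :: "real \<Rightarrow> (real \<Rightarrow> real) \<Rightarrow> real \<Rightarrow> real" where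
  "Phi H g t = cov H t t + 2 * LI t (\<lambda>s. g s * cov H t s) + LI t (\<lambda>s. g s * LI t (\<lambda>u. g u * cov H s u))"

context
  fixes M :: "'w measure" and H :: real and R :: "real \<Rightarrow> 'w \<Rightarrow> real"
  assumes P: "prob_space M" and Rs: "rosenblatt_second_order M H R" and Hpos: "0 < H"
begin

lemma FL:
  fixes W :: "'w \<Rightarrow> real" and g :: "real \<Rightarrow> real"
  assumes t: "t \<ge> 0" and gc: "continuous_on UNIV g"
    and W[measurable]: "W \<in> borel_measurable M" and W2: "integrable M (\<lambda>\<omega>. (W \<omega>)\<^sup>2)"
  shows "integrable M (\<lambda>\<omega>. W \<omega> * LI t (\<lambda>s. g s * R s \<omega>))"
    and "(\<integral>\<omega>. W \<omega> * LI t (\<lambda>s. g s * R s \<omega>) \<partial>M) = LI t (\<lambda>s. g s * (\<integral>\<omega>. W \<omega> * R s \<omega> \<partial>M))"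
proof -
  interpret prob_space M by (rule P)
  interpret PS: pair_sigma_finite M lborel
    by (simp add: lborel.sigma_finite_measure_axioms pair_sigma_finite.intro sigma_finite_measure_axioms)
  have gm[measurable]: "g \<in> borel_measurable borel" by (rule borel_measurable_continuous_onI[OF gc])
  note RJ[measurable] = R_joint[OF P Rs]
  note Rm[measurable] = R_meas[OF P Rs]
  obtain G where G: "G \<ge> 0" "\<And>s. s \<in> {0..t} \<Longrightarrow> \<bar>g s\<bar> \<le> G"
    using bounded_on_Icc[OF gc] by blast
  define F where "F = (\<lambda>\<omega> s. indicator {0..t} s * (g s * (W \<omega> * R (max 0 s) \<omega>)))"
  have Fm[measurable]: "(\<lambda>(\<omega>, s). F \<omega> s) \<in> borel_measurable (M \<Otimes>\<^sub>M lborel)"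
    unfolding F_def by measurable
  define C where "C = G * ((\<integral>\<omega>. (W \<omega>)\<^sup>2 \<partial>M) + t powr (2*H)) / 2"
  have inner: "(\<integral>\<^sup>+\<omega>. ennreal (norm (F \<omega> s)) \<partial>M) \<le> ennreal C * indicator {0..t} s" for s
  proof (cases "s \<in> {0..t}")
    case False then show ?thesis by (simp add: F_def)
  next
    case True
    then have s0: "max 0 s = s" "s \<ge> 0" by auto
    have int2: "integrable M (\<lambda>\<omega>. G * (((W \<omega>)\<^sup>2 + (R s \<omega>)\<^sup>2) / 2))"
      using W2 R_sq[OF P Rs s0(2)] by simp
    have "(\<integral>\<^sup>+\<omega>. ennreal (norm (F \<omega> s)) \<partial>M) \<le> (\<integral>\<^sup>+\<omega>. ennreal (G * (((W \<omega>)\<^sup>2 + (R s \<omega>)\<^sup>2) / 2)) \<partial>M)"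
    proof (rule nn_integral_mono)
      fix \<omega>
      have "0 \<le> (\<bar>W \<omega>\<bar> - \<bar>R s \<omega>\<bar>)\<^sup>2" by simp
      then have a: "\<bar>W \<omega> * R s \<omega>\<bar> \<le> ((W \<omega>)\<^sup>2 + (R s \<omega>)\<^sup>2) / 2"
        by (simp add: power2_eq_square abs_mult algebra_simps)
      have "\<bar>g s\<bar> * \<bar>W \<omega> * R s \<omega>\<bar> \<le> G * (((W \<omega>)\<^sup>2 + (R s \<omega>)\<^sup>2) / 2)"
        by (rule mult_mono[OF G(2)[OF True] a G(1)]) simp
      then have "norm (F \<omega> s) \<le> G * (((W \<omega>)\<^sup>2 + (R s \<omega>)\<^sup>2) / 2)"
        using True by (simp add: F_def s0 abs_mult)
      then show "ennreal (norm (F \<omega> s)) \<le> ennreal (G * (((W \<omega>)\<^sup>2 + (R s \<omega>)\<^sup>2) / 2))"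
        by (rule ennreal_leI)
    qed
    also have "\<dots> = ennreal (\<integral>\<omega>. G * (((W \<omega>)\<^sup>2 + (R s \<omega>)\<^sup>2) / 2) \<partial>M)"
      by (rule nn_integral_eq_integral[OF int2]) (simp add: G(1))
    also have "\<dots> \<le> ennreal C"
    proof (rule ennreal_leI)
      have "(\<integral>\<omega>. G * (((W \<omega>)\<^sup>2 + (R s \<omega>)\<^sup>2) / 2) \<partial>M)
        = G * (((\<integral>\<omega>. (W \<omega>)\<^sup>2 \<partial>M) + s powr (2*H)) / 2)"
        using W2 R_sq[OF P Rs s0(2)] R_var[OF P Rs s0(2)] by simp
      also have "\<dots> \<le> C"
        unfolding C_def using True G(1) Hpos
        by (auto intro!: mult_left_mono powr_mono2 simp: divide_right_mono)
      finally show "(\<integral>\<omega>. G * (((W \<omega>)\<^sup>2 + (R s \<omega>)\<^sup>2) / 2) \<partial>M) \<le> C" .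
    qed
    finally show ?thesis using True by simp
  qed
  have intF: "integrable (M \<Otimes>\<^sub>M lborel) (\<lambda>(\<omega>, s). F \<omega> s)"
  proof (rule integrableI_bounded)
    have "(\<integral>\<^sup>+z. ennreal (norm (case z of (\<omega>, s) \<Rightarrow> F \<omega> s)) \<partial>(M \<Otimes>\<^sub>M lborel))
        = (\<integral>\<^sup>+s. (\<integral>\<^sup>+\<omega>. ennreal (norm (F \<omega> s)) \<partial>M) \<partial>lborel)"
      by (subst PS.nn_integral_snd[symmetric]) (auto simp: case_prod_beta)
    also have "\<dots> \<le> (\<integral>\<^sup>+s. ennreal C * indicator {0..t} s \<partial>lborel)"
      by (rule nn_integral_mono) (rule inner)
    also have "\<dots> = ennreal C * ennreal t"
      using t by (simp add: nn_integral_cmult_indicator)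
    also have "\<dots> < \<infinity>" by (simp add: ennreal_mult_less_top)
    finally show "(\<integral>\<^sup>+z. ennreal (norm (case z of (\<omega>, s) \<Rightarrow> F \<omega> s)) \<partial>(M \<Otimes>\<^sub>M lborel)) < \<infinity>" .
  qed simp
  have eq1: "(\<integral>s. F \<omega> s \<partial>lborel) = W \<omega> * LI t (\<lambda>s. g s * R s \<omega>)" for \<omega>
  proof -
    have "(\<integral>s. F \<omega> s \<partial>lborel) = (\<integral>s. W \<omega> * (indicator {0..t} s * (g s * R s \<omega>)) \<partial>lborel)"
      by (rule Bochner_Integration.integral_cong) (auto simp: F_def split: split_indicator)
    then show ?thesis unfolding LI_def by simp
  qed
  have eq2: "(\<integral>\<omega>. F \<omega> s \<partial>M) = indicator {0..t} s * (g s * (\<integral>\<omega>. W \<omega> * R s \<omega> \<partial>M))" for s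
    by (cases "s \<in> {0..t}") (auto simp: F_def)
  show "integrable M (\<lambda>\<omega>. W \<omega> * LI t (\<lambda>s. g s * R s \<omega>))"
    using PS.integrable_fst[OF intF] by (simp add: eq1)
  have "(\<integral>\<omega>. (\<integral>s. F \<omega> s \<partial>lborel) \<partial>M) = (\<integral>s. (\<integral>\<omega>. F \<omega> s \<partial>M) \<partial>lborel)"
    using PS.integral_fst[OF intF] PS.integral_snd[of "\<lambda>\<omega> s. F \<omega> s"] intF by simp
  then show "(\<integral>\<omega>. W \<omega> * LI t (\<lambda>s. g s * R s \<omega>) \<partial>M) = LI t (\<lambda>s. g s * (\<integral>\<omega>. W \<omega> * R s \<omega> \<partial>M))"
    by (simp add: eq1 eq2 LI_def)
qed


lemma Y_meas:
  assumes gc: "continuous_on UNIV g"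
  shows "(\<lambda>\<omega>. LI t (\<lambda>s. g s * R s \<omega>)) \<in> borel_measurable M"
proof -
  have gm[measurable]: "g \<in> borel_measurable borel" by (rule borel_measurable_continuous_onI[OF gc])
  note RJ[measurable] = R_joint[OF P Rs]
  have e: "(\<lambda>\<omega>. LI t (\<lambda>s. g s * R s \<omega>)) = (\<lambda>\<omega>. \<integral>s. indicator {0..t} s * (g s * R (max 0 s) \<omega>) \<partial>lborel)"
    unfolding LI_def by (intro ext Bochner_Integration.integral_cong) (auto split: split_indicator)
  show ?thesis unfolding e
    by (rule lborel.borel_measurable_lebesgue_integral) measurable
qed

lemma nn_R2:
  assumes t: "t \<ge> 0"
  shows "(\<integral>\<^sup>+\<omega>. (\<integral>\<^sup>+s. ennreal (indicator {0..t} s * (R (max 0 s) \<omega>)\<^sup>2) \<partial>lborel) \<partial>M) < \<infinity>"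
proof -
  interpret prob_space M by (rule P)
  interpret PS: pair_sigma_finite M lborel
    by (simp add: lborel.sigma_finite_measure_axioms pair_sigma_finite.intro sigma_finite_measure_axioms)
  note RJ[measurable] = R_joint[OF P Rs]
  note Rm[measurable] = R_meas[OF P Rs]
  have "(\<integral>\<^sup>+\<omega>. (\<integral>\<^sup>+s. ennreal (indicator {0..t} s * (R (max 0 s) \<omega>)\<^sup>2) \<partial>lborel) \<partial>M)
     = (\<integral>\<^sup>+s. (\<integral>\<^sup>+\<omega>. ennreal (indicator {0..t} s * (R (max 0 s) \<omega>)\<^sup>2) \<partial>M) \<partial>lborel)"
    by (rule PS.Fubini'[symmetric]) measurable
  also have "\<dots> \<le> (\<integral>\<^sup>+s. ennreal (t powr (2*H)) * indicator {0..t} s \<partial>lborel)"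
  proof (rule nn_integral_mono)
    fix s
    show "(\<integral>\<^sup>+\<omega>. ennreal (indicator {0..t} s * (R (max 0 s) \<omega>)\<^sup>2) \<partial>M) \<le> ennreal (t powr (2*H)) * indicator {0..t} s"
    proof (cases "s \<in> {0..t}")
      case False then show ?thesis by simp
    next
      case True
      then have s0: "max 0 s = s" "s \<ge> 0" by auto
      have "(\<integral>\<^sup>+\<omega>. ennreal (indicator {0..t} s * (R (max 0 s) \<omega>)\<^sup>2) \<partial>M) = (\<integral>\<^sup>+\<omega>. ennreal ((R s \<omega>)\<^sup>2) \<partial>M)"
        using True s0 by simp
      also have "\<dots> = ennreal (s powr (2*H))"
        using nn_integral_eq_integral[OF R_sq[OF P Rs s0(2)]] R_var[OF P Rs s0(2)] by simp
      also have "\<dots> \<le> ennreal (t powr (2*H))"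
        using True Hpos by (intro ennreal_leI powr_mono2) auto
      finally show ?thesis using True by simp
    qed
  qed
  also have "\<dots> = ennreal (t powr (2*H)) * ennreal t"
    using t by (simp add: nn_integral_cmult_indicator)
  also have "\<dots> < \<infinity>" by (simp add: ennreal_mult_less_top)
  finally show ?thesis .
qed

lemma Y_sq:
  assumes t: "t \<ge> 0" and gc: "continuous_on UNIV g"
  shows "integrable M (\<lambda>\<omega>. (LI t (\<lambda>s. g s * R s \<omega>))\<^sup>2)"
proof (rule integrableI_bounded)
  interpret prob_space M by (rule P)
  note RJ[measurable] = R_joint[OF P Rs]
  note Ym[measurable] = Y_meas[OF gc, of t]
  show "(\<lambda>\<omega>. (LI t (\<lambda>s. g s * R s \<omega>))\<^sup>2) \<in> borel_measurable M" by measurable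
  obtain G where G: "G \<ge> 0" "\<And>s. s \<in> {0..t} \<Longrightarrow> \<bar>g s\<bar> \<le> G"
    using bounded_on_Icc[OF gc] by blast
  have pw: "ennreal (norm ((LI t (\<lambda>s. g s * R s \<omega>))\<^sup>2))
      \<le> ennreal (t * G\<^sup>2) * (\<integral>\<^sup>+s. ennreal (indicator {0..t} s * (R (max 0 s) \<omega>)\<^sup>2) \<partial>lborel)"
    if \<omega>: "\<omega> \<in> space M" for \<omega>
  proof -
    have Rc: "continuous_on {0..t} (\<lambda>s. R s \<omega>)" by (rule R_cont'[OF P Rs \<omega>])
    have gc': "continuous_on {0..t} g" by (rule continuous_on_subset[OF gc]) simp
    have c1: "continuous_on {0..t} (\<lambda>s. g s * R s \<omega>)" by (intro continuous_intros Rc gc')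
    have c2: "continuous_on {0..t} (\<lambda>s. (g s * R s \<omega>)\<^sup>2)" by (intro continuous_intros c1)
    have c3: "continuous_on {0..t} (\<lambda>s. (R s \<omega>)\<^sup>2)" by (intro continuous_intros Rc)
    have "(LI t (\<lambda>s. g s * R s \<omega>))\<^sup>2 = (integral {0..t} (\<lambda>s. g s * R s \<omega>))\<^sup>2"
      by (simp add: LI_HK[OF c1])
    also have "\<dots> \<le> t * integral {0..t} (\<lambda>s. (g s * R s \<omega>)\<^sup>2)" by (rule hk_cs[OF c1 t])
    also have "\<dots> \<le> t * integral {0..t} (\<lambda>s. G\<^sup>2 * (R s \<omega>)\<^sup>2)"
    proof (intro mult_left_mono integral_le t)
      show "(\<lambda>s. (g s * R s \<omega>)\<^sup>2) integrable_on {0..t}" by (rule integrable_continuous_real[OF c2])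
      show "(\<lambda>s. G\<^sup>2 * (R s \<omega>)\<^sup>2) integrable_on {0..t}"
        by (rule integrable_continuous_real) (intro continuous_intros c3)
      fix s assume "s \<in> {0..t}"
      then have "\<bar>g s\<bar>\<^sup>2 \<le> G\<^sup>2" using G by (intro power_mono) auto
      then have "(g s)\<^sup>2 * (R s \<omega>)\<^sup>2 \<le> G\<^sup>2 * (R s \<omega>)\<^sup>2" by (intro mult_right_mono) auto
      then show "(g s * R s \<omega>)\<^sup>2 \<le> G\<^sup>2 * (R s \<omega>)\<^sup>2" by (simp add: power_mult_distrib)
    qed
    also have "\<dots> = t * G\<^sup>2 * integral {0..t} (\<lambda>s. (R s \<omega>)\<^sup>2)"
      using integral_cmul[where c="G\<^sup>2" and f="\<lambda>s. (R s \<omega>)\<^sup>2" and S="{0..t}"] by simp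
    also have "integral {0..t} (\<lambda>s. (R s \<omega>)\<^sup>2) = (\<integral>s. indicator {0..t} s * (R (max 0 s) \<omega>)\<^sup>2 \<partial>lborel)"
      unfolding LI_HK[OF c3, symmetric] LI_def
      by (intro Bochner_Integration.integral_cong) (auto split: split_indicator)
    finally have le: "(LI t (\<lambda>s. g s * R s \<omega>))\<^sup>2 \<le> t * G\<^sup>2 * (\<integral>s. indicator {0..t} s * (R (max 0 s) \<omega>)\<^sup>2 \<partial>lborel)" .
    have c4: "continuous_on {0..t} (\<lambda>s. (R (max 0 s) \<omega>)\<^sup>2)"
      using c3 by (rule continuous_on_eq) auto
    have intl: "integrable lborel (\<lambda>s. indicator {0..t} s * (R (max 0 s) \<omega>)\<^sup>2)"
      using borel_integrable_atLeastAtMost'[OF c4] unfolding set_integrable_def by simp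
    have "ennreal (norm ((LI t (\<lambda>s. g s * R s \<omega>))\<^sup>2)) \<le> ennreal (t * G\<^sup>2 * (\<integral>s. indicator {0..t} s * (R (max 0 s) \<omega>)\<^sup>2 \<partial>lborel))"
      using le by (intro ennreal_leI) simp
    also have "\<dots> = ennreal (t * G\<^sup>2) * ennreal (\<integral>s. indicator {0..t} s * (R (max 0 s) \<omega>)\<^sup>2 \<partial>lborel)"
      using t by (simp add: ennreal_mult)
    also have "ennreal (\<integral>s. indicator {0..t} s * (R (max 0 s) \<omega>)\<^sup>2 \<partial>lborel) = (\<integral>\<^sup>+s. ennreal (indicator {0..t} s * (R (max 0 s) \<omega>)\<^sup>2) \<partial>lborel)"
      by (rule nn_integral_eq_integral[OF intl, symmetric]) simp
    finally show ?thesis .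
  qed
  have "(\<integral>\<^sup>+\<omega>. ennreal (norm ((LI t (\<lambda>s. g s * R s \<omega>))\<^sup>2)) \<partial>M)
      \<le> (\<integral>\<^sup>+\<omega>. ennreal (t * G\<^sup>2) * (\<integral>\<^sup>+s. ennreal (indicator {0..t} s * (R (max 0 s) \<omega>)\<^sup>2) \<partial>lborel) \<partial>M)"
    by (rule nn_integral_mono) (rule pw)
  also have "\<dots> = ennreal (t * G\<^sup>2) * (\<integral>\<^sup>+\<omega>. (\<integral>\<^sup>+s. ennreal (indicator {0..t} s * (R (max 0 s) \<omega>)\<^sup>2) \<partial>lborel) \<partial>M)"
    by (rule nn_integral_cmult) measurable
  also have "\<dots> < \<infinity>" using nn_R2[OF t] by (simp add: ennreal_mult_less_top)
  finally show "(\<integral>\<^sup>+\<omega>. ennreal (norm ((LI t (\<lambda>s. g s * R s \<omega>))\<^sup>2)) \<partial>M) < \<infinity>" .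
qed



lemma R_int: "t \<ge> 0 \<Longrightarrow> integrable M (R t)"
proof -
  interpret prob_space M by (rule P)
  assume t: "t \<ge> 0"
  have "integrable M (\<lambda>\<omega>. 1 * R t \<omega>)"
    by (rule L2_prod) (use R_sq[OF P Rs t] R_meas[OF P Rs] in auto)
  then show ?thesis by simp
qed

lemma SM:
  assumes t: "t \<ge> 0" and gc: "continuous_on UNIV g"
  shows "(\<lambda>\<omega>. R t \<omega> + LI t (\<lambda>s. g s * R s \<omega>)) \<in> borel_measurable M"
    and "integrable M (\<lambda>\<omega>. (R t \<omega> + LI t (\<lambda>s. g s * R s \<omega>))\<^sup>2)"
    and "integrable M (\<lambda>\<omega>. R t \<omega> + LI t (\<lambda>s. g s * R s \<omega>))"
    and "(\<integral>\<omega>. R t \<omega> + LI t (\<lambda>s. g s * R s \<omega>) \<partial>M) = 0"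
    and "(\<integral>\<omega>. (R t \<omega> + LI t (\<lambda>s. g s * R s \<omega>))\<^sup>2 \<partial>M) = Phi H g t"
proof -
  interpret prob_space M by (rule P)
  define Y where "Y = (\<lambda>\<omega>. LI t (\<lambda>s. g s * R s \<omega>))"
  have Ym[measurable]: "Y \<in> borel_measurable M" unfolding Y_def by (rule Y_meas[OF gc])
  note Rm[measurable] = R_meas[OF P Rs]
  have Y2: "integrable M (\<lambda>\<omega>. (Y \<omega>)\<^sup>2)" unfolding Y_def by (rule Y_sq[OF t gc])
  have one2: "integrable M (\<lambda>\<omega>. ((\<lambda>_. 1::real) \<omega>)\<^sup>2)" by simp
  note FL1 = FL[OF t gc _ one2]
  have intY: "integrable M Y" using FL1(1) by (simp add: Y_def)
  have EY: "(\<integral>\<omega>. Y \<omega> \<partial>M) = 0"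
  proof -
    have "(\<integral>\<omega>. Y \<omega> \<partial>M) = LI t (\<lambda>s. g s * (\<integral>\<omega>. 1 * R s \<omega> \<partial>M))"
      using FL1(2) by (simp add: Y_def)
    also have "\<dots> = LI t (\<lambda>s. 0)" by (rule LI_cong) (simp add: R_mean[OF P Rs])
    finally show ?thesis by (simp add: LI_zero)
  qed
  note FLR = FL[OF t gc R_meas[OF P Rs] R_sq[OF P Rs t]]
  have intRY: "integrable M (\<lambda>\<omega>. R t \<omega> * Y \<omega>)" using FLR(1) by (simp add: Y_def)
  have ERY: "(\<integral>\<omega>. R t \<omega> * Y \<omega> \<partial>M) = LI t (\<lambda>s. g s * cov H t s)"
  proof -
    have "(\<integral>\<omega>. R t \<omega> * Y \<omega> \<partial>M) = LI t (\<lambda>s. g s * (\<integral>\<omega>. R t \<omega> * R s \<omega> \<partial>M))"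
      using FLR(2) by (simp add: Y_def)
    also have "\<dots> = LI t (\<lambda>s. g s * cov H t s)" by (rule LI_cong) (simp add: R_cov[OF P Rs] t)
    finally show ?thesis .
  qed
  note FLY = FL[OF t gc Ym Y2]
  have intYY: "integrable M (\<lambda>\<omega>. Y \<omega> * Y \<omega>)" using FLY(1) by (simp add: Y_def)
  have EYY: "(\<integral>\<omega>. Y \<omega> * Y \<omega> \<partial>M) = LI t (\<lambda>s. g s * LI t (\<lambda>u. g u * cov H s u))"
  proof -
    have "(\<integral>\<omega>. Y \<omega> * Y \<omega> \<partial>M) = LI t (\<lambda>s. g s * (\<integral>\<omega>. Y \<omega> * R s \<omega> \<partial>M))"
      using FLY(2) by (simp add: Y_def)
    also have "\<dots> = LI t (\<lambda>s. g s * LI t (\<lambda>u. g u * cov H s u))"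
    proof (rule LI_cong)
      fix s assume s: "s \<in> {0..t}"
      then have s0: "s \<ge> 0" by simp
      note FLs = FL[OF t gc R_meas[OF P Rs] R_sq[OF P Rs s0]]
      have "(\<integral>\<omega>. Y \<omega> * R s \<omega> \<partial>M) = (\<integral>\<omega>. R s \<omega> * Y \<omega> \<partial>M)" by (simp add: mult.commute)
      also have "\<dots> = LI t (\<lambda>u. g u * (\<integral>\<omega>. R s \<omega> * R u \<omega> \<partial>M))"
        using FLs(2) by (simp add: Y_def)
      also have "\<dots> = LI t (\<lambda>u. g u * cov H s u)" by (rule LI_cong) (simp add: R_cov[OF P Rs] s0)
      finally show "g s * (\<integral>\<omega>. Y \<omega> * R s \<omega> \<partial>M) = g s * LI t (\<lambda>u. g u * cov H s u)" by simp
    qed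
    finally show ?thesis .
  qed
  have intR: "integrable M (R t)" by (rule R_int[OF t])
  show "(\<lambda>\<omega>. R t \<omega> + LI t (\<lambda>s. g s * R s \<omega>)) \<in> borel_measurable M"
    using Ym by (simp add: Y_def)
  show "integrable M (\<lambda>\<omega>. R t \<omega> + LI t (\<lambda>s. g s * R s \<omega>))"
    using intR intY by (simp add: Y_def)
  show "(\<integral>\<omega>. R t \<omega> + LI t (\<lambda>s. g s * R s \<omega>) \<partial>M) = 0"
    using intR intY EY R_mean[OF P Rs t] by (simp add: Y_def)
  have sq: "(R t \<omega> + Y \<omega>)\<^sup>2 = (R t \<omega>)\<^sup>2 + 2 * (R t \<omega> * Y \<omega>) + Y \<omega> * Y \<omega>" for \<omega>
    by (simp add: power2_eq_square algebra_simps)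
  have i3: "integrable M (\<lambda>\<omega>. (R t \<omega>)\<^sup>2 + 2 * (R t \<omega> * Y \<omega>) + Y \<omega> * Y \<omega>)"
    using R_sq[OF P Rs t] intRY intYY by simp
  then have "integrable M (\<lambda>\<omega>. (R t \<omega> + Y \<omega>)\<^sup>2)"
    by (simp add: sq)
  then show "integrable M (\<lambda>\<omega>. (R t \<omega> + LI t (\<lambda>s. g s * R s \<omega>))\<^sup>2)"
    by (simp add: Y_def)
  have "(\<integral>\<omega>. (R t \<omega> + Y \<omega>)\<^sup>2 \<partial>M) = (\<integral>\<omega>. (R t \<omega>)\<^sup>2 + 2 * (R t \<omega> * Y \<omega>) + Y \<omega> * Y \<omega> \<partial>M)"
    by (simp add: sq)
  also have "\<dots> = (\<integral>\<omega>. (R t \<omega>)\<^sup>2 \<partial>M) + 2 * (\<integral>\<omega>. R t \<omega> * Y \<omega> \<partial>M) + (\<integral>\<omega>. Y \<omega> * Y \<omega> \<partial>M)"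
    using R_sq[OF P Rs t] intRY intYY by simp
  also have "\<dots> = Phi H g t"
    unfolding Phi_def ERY EYY R_var[OF P Rs t] cov_diag ..
  finally show "(\<integral>\<omega>. (R t \<omega> + LI t (\<lambda>s. g s * R s \<omega>))\<^sup>2 \<partial>M) = Phi H g t"
    by (simp add: Y_def)
qed


end


lemma ode_exist:
  fixes r :: "real \<Rightarrow> real" and a x0 :: real
  assumes rc: "continuous_on {0..} r" and b: "b \<ge> 0"
  defines "f \<equiv> \<lambda>t. exp (a*t) * x0 + r t + a * exp (a*t) * integral {0..t} (\<lambda>s. exp (- (a* s)) * r s)"
  shows "continuous_on {0..b} f" "f integrable_on {0..b}" "f b = x0 + integral {0..b} (\<lambda>s. a * f s) + r b"
proof -
  have rcb: "continuous_on {0..b} r" by (rule continuous_on_subset[OF rc]) auto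
  have ec: "continuous_on {0..b} (\<lambda>s. exp (- (a* s)) * r s)" by (intro continuous_intros rcb)
  define J where "J = (\<lambda>t. integral {0..t} (\<lambda>s. exp (- (a* s)) * r s))"
  have Jc: "continuous_on {0..b} J" unfolding J_def
    by (rule indefinite_integral_continuous_1[OF integrable_continuous_real[OF ec]])
  have fJ: "f = (\<lambda>t. exp (a*t) * x0 + r t + a * exp (a*t) * J t)" unfolding f_def J_def ..
  show fc: "continuous_on {0..b} f" unfolding fJ by (intro continuous_intros rcb Jc)
  then show "f integrable_on {0..b}" by (rule integrable_continuous_real)
  define Y where "Y = (\<lambda>t. exp (a*t) * (x0 + a * J t))"
  have dJ: "(J has_real_derivative exp (- (a*t)) * r t) (at t within {0..b})" if "t \<in> {0..b}" for t
    unfolding J_def has_real_derivative_iff_has_vector_derivative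
    by (rule integral_has_vector_derivative[OF ec that])
  have dY: "(Y has_real_derivative a * f t) (at t within {0..b})" if t: "t \<in> {0..b}" for t
  proof -
    have "(Y has_real_derivative (a * exp (a*t) * (x0 + a * J t) + exp (a*t) * (a * (exp (- (a*t)) * r t)))) (at t within {0..b})"
      unfolding Y_def by (auto intro!: derivative_eq_intros dJ[OF t])
    moreover have "a * exp (a*t) * (x0 + a * J t) + exp (a*t) * (a * (exp (- (a*t)) * r t)) = a * f t"
      unfolding fJ by (simp add: algebra_simps exp_minus field_simps)
    ultimately show ?thesis by simp
  qed
  have "((\<lambda>s. a * f s) has_integral (Y b - Y 0)) {0..b}"
    using dY b by (intro fundamental_theorem_of_calculus) (auto simp: has_real_derivative_iff_has_vector_derivative[symmetric])
  then have "integral {0..b} (\<lambda>s. a * f s) = Y b - Y 0" by (rule integral_unique)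
  moreover have "Y 0 = x0" by (simp add: Y_def J_def)
  moreover have "f b = Y b + r b" by (simp add: fJ Y_def algebra_simps)
  ultimately show "f b = x0 + integral {0..b} (\<lambda>s. a * f s) + r b" by simp
qed

lemma ode_unique:
  fixes f r :: "real \<Rightarrow> real" and a x0 :: real
  assumes rc: "continuous_on {0..} r"
    and sol: "\<And>t. t \<ge> 0 \<Longrightarrow> f integrable_on {0..t} \<and> f t = x0 + integral {0..t} (\<lambda>s. a * f s) + r t"
    and b: "b \<ge> 0"
  shows "f b = exp (a*b) * x0 + r b + a * exp (a*b) * integral {0..b} (\<lambda>s. exp (- (a* s)) * r s)"
proof -
  have rcb: "continuous_on {0..b} r" by (rule continuous_on_subset[OF rc]) auto
  have fi: "f integrable_on {0..b}" using sol[OF b] by blast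
  have afi: "(\<lambda>s. a * f s) integrable_on {0..b}" using integrable_on_cmult_left[OF fi, of a] by simp
  define Y where "Y = (\<lambda>t. x0 + integral {0..t} (\<lambda>s. a * f s))"
  have Yc: "continuous_on {0..b} Y" unfolding Y_def
    by (intro continuous_intros indefinite_integral_continuous_1[OF afi])
  have fY: "f t = Y t + r t" if "t \<in> {0..b}" for t using sol[of t] that by (simp add: Y_def)
  have fc: "continuous_on {0..b} f"
    by (rule continuous_on_eq[of _ "\<lambda>t. Y t + r t"]) (intro continuous_intros Yc rcb, simp add: fY)
  have afc: "continuous_on {0..b} (\<lambda>s. a * f s)" by (intro continuous_intros fc)
  have dY: "(Y has_real_derivative a * f t) (at t within {0..b})" if t: "t \<in> {0..b}" for t
  proof -
    have d: "((\<lambda>u. integral {0..u} f) has_real_derivative f t) (at t within {0..b})"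
      unfolding has_real_derivative_iff_has_vector_derivative
      by (rule integral_has_vector_derivative[OF fc t])
    have Yeq: "Y = (\<lambda>u. x0 + a * integral {0..u} f)" unfolding Y_def by simp
    show ?thesis unfolding Yeq by (auto intro!: derivative_eq_intros d)
  qed
  define P where "P = (\<lambda>t. exp (- (a*t)) * Y t)"
  have dP: "(P has_real_derivative a * (exp (- (a*t)) * r t)) (at t within {0..b})" if t: "t \<in> {0..b}" for t
  proof -
    have "(P has_real_derivative (- a * exp (- (a*t)) * Y t + exp (- (a*t)) * (a * f t))) (at t within {0..b})"
      unfolding P_def by (auto intro!: derivative_eq_intros dY[OF t])
    moreover have "- a * exp (- (a*t)) * Y t + exp (- (a*t)) * (a * f t) = a * (exp (- (a*t)) * r t)"
      using fY[OF t] by (simp add: algebra_simps)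
    ultimately show ?thesis by simp
  qed
  have "((\<lambda>s. a * (exp (- (a* s)) * r s)) has_integral (P b - P 0)) {0..b}"
    using dP b by (intro fundamental_theorem_of_calculus) (auto simp: has_real_derivative_iff_has_vector_derivative[symmetric])
  then have "integral {0..b} (\<lambda>s. a * (exp (- (a* s)) * r s)) = P b - P 0" by (rule integral_unique)
  moreover have "integral {0..b} (\<lambda>s. a * (exp (- (a* s)) * r s)) = a * integral {0..b} (\<lambda>s. exp (- (a* s)) * r s)"
    using integral_cmul[where c=a and f="\<lambda>s. exp (- (a* s)) * r s" and S="{0..b}"] by simp
  moreover have "P 0 = x0" by (simp add: P_def Y_def)
  ultimately have "exp (- (a*b)) * Y b = x0 + a * integral {0..b} (\<lambda>s. exp (- (a* s)) * r s)"
    by (simp add: P_def)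
  then have "Y b = exp (a*b) * (x0 + a * integral {0..b} (\<lambda>s. exp (- (a* s)) * r s))"
    by (simp add: exp_minus field_simps)
  then show ?thesis using fY[of b] b by (simp add: algebra_simps)
qed


definition Zq :: "(real \<Rightarrow> 'w \<Rightarrow> real) \<Rightarrow> real \<Rightarrow> real \<Rightarrow> 'w \<Rightarrow> real" where
  "Zq R a t \<omega> = R t \<omega> + a * exp (a * t) * integral {0..t} (\<lambda>s. exp (- (a * s)) * R s \<omega>)"

definition ga :: "real \<Rightarrow> real \<Rightarrow> real \<Rightarrow> real" where
  "ga a t s = a * exp (a * t) * exp (- (a * s))"

lemma ga_cont: "continuous_on UNIV (ga a t)"
  unfolding ga_def by (intro continuous_intros)

context
  fixes M :: "'w measure" and H :: real and R :: "real \<Rightarrow> 'w \<Rightarrow> real"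
  assumes P: "prob_space M" and Rs: "rosenblatt_second_order M H R" and Hpos: "0 < H"
begin

lemma Zq_LI:
  assumes \<omega>: "\<omega> \<in> space M"
  shows "Zq R a t \<omega> = R t \<omega> + LI t (\<lambda>s. ga a t s * R s \<omega>)"
proof -
  have c: "continuous_on {0..t} (\<lambda>s. exp (- (a * s)) * R s \<omega>)"
    by (intro continuous_intros R_cont'[OF P Rs \<omega>])
  have "LI t (\<lambda>s. ga a t s * R s \<omega>) = (\<integral>s. (a * exp (a * t)) * (indicator {0..t} s * (exp (- (a * s)) * R s \<omega>)) \<partial>lborel)"
    unfolding LI_def ga_def by (intro Bochner_Integration.integral_cong) auto
  also have "\<dots> = a * exp (a * t) * LI t (\<lambda>s. exp (- (a * s)) * R s \<omega>)"
    unfolding LI_def by simp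
  finally show ?thesis unfolding Zq_def LI_HK[OF c] by simp
qed

lemma ZqSM:
  assumes t: "t \<ge> 0"
  shows "Zq R a t \<in> borel_measurable M"
    and "integrable M (\<lambda>\<omega>. (Zq R a t \<omega>)\<^sup>2)"
    and "integrable M (Zq R a t)"
    and "(\<integral>\<omega>. Zq R a t \<omega> \<partial>M) = 0"
    and "(\<integral>\<omega>. (Zq R a t \<omega>)\<^sup>2 \<partial>M) = Phi H (ga a t) t"
proof -
  note S = SM[OF P Rs Hpos t ga_cont[of a t]]
  have e: "\<And>\<omega>. \<omega> \<in> space M \<Longrightarrow> Zq R a t \<omega> = R t \<omega> + LI t (\<lambda>s. ga a t s * R s \<omega>)"
    by (rule Zq_LI)
  have m: "Zq R a t \<in> borel_measurable M \<longleftrightarrow> (\<lambda>\<omega>. R t \<omega> + LI t (\<lambda>s. ga a t s * R s \<omega>)) \<in> borel_measurable M"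
    by (rule measurable_cong) (simp add: e)
  show "Zq R a t \<in> borel_measurable M" using S(1) m by simp
  have i2: "integrable M (\<lambda>\<omega>. (Zq R a t \<omega>)\<^sup>2) \<longleftrightarrow> integrable M (\<lambda>\<omega>. (R t \<omega> + LI t (\<lambda>s. ga a t s * R s \<omega>))\<^sup>2)"
    by (rule Bochner_Integration.integrable_cong) (simp_all add: e)
  show "integrable M (\<lambda>\<omega>. (Zq R a t \<omega>)\<^sup>2)" using S(2) i2 by simp
  have i1: "integrable M (Zq R a t) \<longleftrightarrow> integrable M (\<lambda>\<omega>. R t \<omega> + LI t (\<lambda>s. ga a t s * R s \<omega>))"
    by (rule Bochner_Integration.integrable_cong) (simp_all add: e)
  show "integrable M (Zq R a t)" using S(3) i1 by simp
  have e1: "(\<integral>\<omega>. Zq R a t \<omega> \<partial>M) = (\<integral>\<omega>. R t \<omega> + LI t (\<lambda>s. ga a t s * R s \<omega>) \<partial>M)"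
    by (rule Bochner_Integration.integral_cong) (simp_all add: e)
  show "(\<integral>\<omega>. Zq R a t \<omega> \<partial>M) = 0" using S(4) e1 by simp
  have e2: "(\<integral>\<omega>. (Zq R a t \<omega>)\<^sup>2 \<partial>M) = (\<integral>\<omega>. (R t \<omega> + LI t (\<lambda>s. ga a t s * R s \<omega>))\<^sup>2 \<partial>M)"
    by (rule Bochner_Integration.integral_cong) (simp_all add: e)
  show "(\<integral>\<omega>. (Zq R a t \<omega>)\<^sup>2 \<partial>M) = Phi H (ga a t) t" using S(5) e2 by simp
qed

end


lemma rosen_scale:
  assumes Rs: "rosenblatt_second_order M H R" and l: "l > 0"
  shows "rosenblatt_second_order M H (\<lambda>s \<omega>. l powr H * R (s / l) \<omega>)"
proof -
  have m: "\<And>t. R t \<in> borel_measurable M"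
    and z: "\<And>\<omega>. \<omega> \<in> space M \<Longrightarrow> R 0 \<omega> = 0"
    and c: "\<And>\<omega>. \<omega> \<in> space M \<Longrightarrow> continuous_on {0..} (\<lambda>t. R t \<omega>)"
    and i: "\<And>t. t \<ge> 0 \<Longrightarrow> integrable M (\<lambda>\<omega>. (R t \<omega>)\<^sup>2)"
    and mu: "\<And>t. t \<ge> 0 \<Longrightarrow> (\<integral>\<omega>. R t \<omega> \<partial>M) = 0"
    and cv: "\<And>s t. s \<ge> 0 \<Longrightarrow> t \<ge> 0 \<Longrightarrow> (\<integral>\<omega>. R s \<omega> * R t \<omega> \<partial>M)
         = (s powr (2*H) + t powr (2*H) - \<bar>t - s\<bar> powr (2*H)) / 2"
    using Rs unfolding rosenblatt_second_order_def by blast+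
  show ?thesis
  unfolding rosenblatt_second_order_def
  proof (intro conjI allI impI ballI)
    fix t show "(\<lambda>\<omega>. l powr H * R (t / l) \<omega>) \<in> borel_measurable M"
      by (rule borel_measurable_times[OF borel_measurable_const m])
  next
    fix \<omega> assume \<omega>: "\<omega> \<in> space M"
    show "l powr H * R (0 / l) \<omega> = 0"
      using z[OF \<omega>] by simp
    have "continuous_on {0..} (\<lambda>t. R (t / l) \<omega>)"
      by (rule continuous_on_compose2[OF c[OF \<omega>], of _ "\<lambda>t. t / l"]) (use l in \<open>auto intro!: continuous_intros\<close>)
    then show "continuous_on {0..} (\<lambda>t. l powr H * R (t / l) \<omega>)"
      by (rule continuous_on_mult_left)
  next
    fix t :: real assume t: "t \<ge> 0"
    then have t': "t / l \<ge> 0" using l by simp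
    have "integrable M (\<lambda>\<omega>. (l powr H)\<^sup>2 * (R (t / l) \<omega>)\<^sup>2)"
      using i[OF t'] by (rule integrable_mult_right)
    then show "integrable M (\<lambda>\<omega>. (l powr H * R (t / l) \<omega>)\<^sup>2)"
      by (simp only: power_mult_distrib)
    show "(\<integral>\<omega>. l powr H * R (t / l) \<omega> \<partial>M) = 0"
      using mu[OF t'] by (simp only: integral_mult_right_zero mult_zero_right)
  next
    fix s t :: real assume s: "s \<ge> 0" and t: "t \<ge> 0"
    then have st: "s / l \<ge> 0" "t / l \<ge> 0" using l by auto
    define L where "L = l powr (2 * H)"
    have L: "L > 0" unfolding L_def using l by simp
    have alg: "L * ((a / L + b / L - c / L) / 2) = (a + b - c) / 2" for a b c :: real
      using L by (simp add: field_simps)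
    have f1: "(\<lambda>\<omega>. l powr H * R (s / l) \<omega> * (l powr H * R (t / l) \<omega>)) = (\<lambda>\<omega>. (l powr H * l powr H) * (R (s / l) \<omega> * R (t / l) \<omega>))"
      by (rule ext) (simp only: mult.assoc mult.commute mult.left_commute)
    have e1: "(\<integral>\<omega>. l powr H * R (s / l) \<omega> * (l powr H * R (t / l) \<omega>) \<partial>M)
        = (l powr H * l powr H) * (\<integral>\<omega>. R (s / l) \<omega> * R (t / l) \<omega> \<partial>M)"
      unfolding f1 by (rule integral_mult_right_zero)
    have e3: "\<bar>t / l - s / l\<bar> = \<bar>t - s\<bar> / l" using l by (simp add: diff_divide_distrib[symmetric])
    have e4: "l powr H * l powr H = L" unfolding L_def by (simp add: powr_add[symmetric])
    have e5: "(s / l) powr (2 * H) = s powr (2 * H) / L" "(t / l) powr (2 * H) = t powr (2 * H) / L"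
       "(\<bar>t - s\<bar> / l) powr (2 * H) = \<bar>t - s\<bar> powr (2 * H) / L"
      unfolding L_def by (rule powr_divide)+
    show "(\<integral>\<omega>. l powr H * R (s / l) \<omega> * (l powr H * R (t / l) \<omega>) \<partial>M)
        = (s powr (2 * H) + t powr (2 * H) - \<bar>t - s\<bar> powr (2 * H)) / 2"
      unfolding e1 cv[OF st] e3 e4 e5 by (rule alg)
  qed
qed


lemma Zq_scale:
  fixes R :: "real \<Rightarrow> 'w \<Rightarrow> real"
  assumes l: "l > 0"
  shows "Zq (\<lambda>s \<omega>. l powr H * R (s / l) \<omega>) (-1) (l * t) \<omega> = l powr H * Zq R (- l) t \<omega>"
proof -
  define J where "J = integral {0..t} (\<lambda>x. exp (l * x) * R x \<omega>)"
  have img: "(\<lambda>x. x / l) ` {0..l * t} = {0..t}"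
  proof (cases "t \<ge> 0")
    case True
    then show ?thesis using l by (simp add: image_divide_atLeastAtMost)
  next
    case False
    then have "l * t < 0" using l by (simp add: mult_pos_neg)
    then show ?thesis using False by simp
  qed
  have st: "integral ((\<lambda>x. x / l) ` {0..l * t}) (\<lambda>x. exp (l * x) * R (l * x / l) \<omega>)
      = (1 / \<bar>l\<bar>) *\<^sub>R integral {0..l * t} (\<lambda>x. exp x * R (x / l) \<omega>)"
    by (rule integral_stretch_real) (use l in simp)
  have st2: "(\<lambda>x. exp (l * x) * R (l * x / l) \<omega>) = (\<lambda>x. exp (l * x) * R x \<omega>)"
    using l by (simp add: fun_eq_iff)
  have i2: "integral {0..l * t} (\<lambda>x. exp x * R (x / l) \<omega>) = l * J"
    using st l unfolding img st2 J_def by (simp add: field_simps)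
  have f1: "(\<lambda>s. exp (- (- 1 * s)) * (l powr H * R (s / l) \<omega>)) = (\<lambda>s. l powr H *\<^sub>R (exp s * R (s / l) \<omega>))"
    by (simp add: fun_eq_iff)
  have i1: "integral {0..l * t} (\<lambda>s. exp (- (- 1 * s)) * (l powr H * R (s / l) \<omega>)) = l powr H * (l * J)"
    unfolding f1 integral_cmul i2 by simp
  have i3: "integral {0..t} (\<lambda>s. exp (- (- l * s)) * R s \<omega>) = J"
    unfolding J_def by simp
  have alg: "A * B - C * (A * (l * J)) = A * (B - l * C * J)" for A B C :: real
    by (simp add: algebra_simps)
  have e: "exp (- 1 * (l * t)) = exp (- l * t)" by simp
  show ?thesis
    unfolding Zq_def i1 i3 e using l by (simp add: alg)
qed

lemma opt_g:
  fixes A c H :: real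
  assumes A: "A > 0" and H: "0 < H" "H < 1"
  defines "D \<equiv> sqrt (c\<^sup>2 + 4 * H * (1 - H) * A)"
  defines "ss \<equiv> ((2 * H - 1) * c + D) / (2 * (1 - H))"
  shows "ss > 0" "\<And>s. s > 0 \<Longrightarrow> (A + (c + ss)\<^sup>2) * ss powr (-2 * H) \<le> (A + (c + s)\<^sup>2) * s powr (-2 * H)"
proof -
  define s2 where "s2 = ((2 * H - 1) * c - D) / (2 * (1 - H))"
  define g where "g = (\<lambda>s. (A + (c + s)\<^sup>2) * s powr (-2 * H))"
  define h where "h = (\<lambda>s. 2 * (1 - H) * s\<^sup>2 + 2 * (1 - 2 * H) * c * s - 2 * H * (A + c\<^sup>2))"
  have pos4: "0 < 4 * H * (1 - H) * A" using A H by simp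
  have rad: "0 \<le> c\<^sup>2 + 4 * H * (1 - H) * A" using pos4 zero_le_power2[of c] by linarith
  have D2: "D\<^sup>2 = c\<^sup>2 + 4 * H * (1 - H) * A" unfolding D_def using rad by simp
  have D0: "D \<ge> 0" unfolding D_def using rad by simp
  have "c\<^sup>2 < D\<^sup>2" using D2 pos4 by simp
  then have cD: "\<bar>c\<bar> < D" using D0 by (metis abs_le_square_iff abs_of_nonneg not_less power2_abs)
  have H1: "\<bar>2 * H - 1\<bar> < 1" using H by auto
  have "\<bar>(2 * H - 1) * c\<bar> \<le> \<bar>c\<bar>" using H1 by (simp add: abs_mult mult_left_le_one_le)
  then have p1: "(2 * H - 1) * c + D > 0" and p2: "(2 * H - 1) * c - D < 0" using cD by linarith+
  show ssp: "ss > 0" unfolding ss_def using p1 H by simp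
  have s2n: "s2 < 0" unfolding s2_def using p2 H by (simp add: divide_neg_pos)
  define m where "m = 2 * (1 - H)"
  define P where "P = (2 * H - 1) * c"
  have mp: "m > 0" unfolding m_def using H by simp
  have ssm: "ss = (P + D) / m" unfolding ss_def m_def P_def ..
  have s2m: "s2 = (P - D) / m" unfolding s2_def m_def P_def ..
  have fac: "h s = 2 * (1 - H) * (s - ss) * (s - s2)" for s
  proof -
    have st1: "m * (s - ss) * (s - s2) = ((m * s - P)\<^sup>2 - D\<^sup>2) / m"
      unfolding ssm s2m using mp by (simp add: field_simps power2_eq_square)
    have st2: "(m * s - P)\<^sup>2 - D\<^sup>2 = m * h s"
      unfolding D2 h_def m_def P_def by (simp add: power2_eq_square algebra_simps)
    show ?thesis using st1 mp unfolding st2 m_def[symmetric] by simp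
  qed
  have dg: "DERIV g s :> s powr (-2 * H - 1) * h s" if s: "s > 0" for s
  proof -
    have d: "DERIV g s :> 2 * (c + s) * s powr (-2 * H) + (A + (c + s)\<^sup>2) * ((-2 * H) * s powr (-2 * H - 1))"
      unfolding g_def
      by (rule derivative_eq_intros has_real_derivative_powr[OF s] refl | simp)+
    have sp: "s powr (-2 * H) = s * s powr (-2 * H - 1)"
    proof -
      have "s powr (-2 * H) = s powr ((-2 * H - 1) + 1)" by simp
      also have "\<dots> = s powr (-2 * H - 1) * s powr 1" by (rule powr_add)
      finally show ?thesis using s by simp
    qed
    have "2 * (c + s) * s powr (-2 * H) + (A + (c + s)\<^sup>2) * ((-2 * H) * s powr (-2 * H - 1))
        = s powr (-2 * H - 1) * (2 * (c + s) * s - 2 * H * (A + (c + s)\<^sup>2))"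
      unfolding sp by (simp add: algebra_simps)
    also have "2 * (c + s) * s - 2 * H * (A + (c + s)\<^sup>2) = h s"
      unfolding h_def by (simp add: algebra_simps power2_eq_square)
    finally show ?thesis using d by simp
  qed
  fix s :: real assume s: "s > 0"
  show "(A + (c + ss)\<^sup>2) * ss powr (-2 * H) \<le> (A + (c + s)\<^sup>2) * s powr (-2 * H)"
  proof (cases "s \<le> ss")
    case True
    have "g ss \<le> g s"
    proof (rule DERIV_nonpos_imp_nonincreasing[OF True])
      fix x assume x: "s \<le> x" "x \<le> ss"
      then have xp: "x > 0" using s by simp
      have "h x \<le> 0" unfolding fac using x xp s2n H
        by (intro mult_nonpos_nonneg mult_nonneg_nonpos) auto
      then have "x powr (-2 * H - 1) * h x \<le> 0" using xp by (simp add: mult_nonneg_nonpos)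
      then show "\<exists>y. DERIV g x :> y \<and> y \<le> 0" using dg[OF xp] by blast
    qed
    then show ?thesis unfolding g_def .
  next
    case False
    then have le: "ss \<le> s" by simp
    have "g ss \<le> g s"
    proof (rule DERIV_nonneg_imp_nondecreasing[OF le])
      fix x assume x: "ss \<le> x" "x \<le> s"
      then have xp: "x > 0" using ssp by simp
      have "h x \<ge> 0" unfolding fac using x xp s2n H by simp
      then have "x powr (-2 * H - 1) * h x \<ge> 0" using xp by simp
      then show "\<exists>y. DERIV g x :> y \<and> y \<ge> 0" using dg[OF xp] by blast
    qed
    then show ?thesis unfolding g_def .
  qed
qed

lemma opt:
  fixes b c q r H K k :: real
  assumes b: "b \<noteq> 0" and q: "q > 0" and r: "r > 0" and H: "0 < H" "H < 1"
    and K: "K = - (c + sqrt (c\<^sup>2 + 4 * H * (1 - H) * b\<^sup>2 * q / r)) / (2 * b * (1 - H))"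
    and k: "c + b * k < 0"
  shows "c + b * K < 0"
    and "(q + r * K\<^sup>2) * (- (c + b * K)) powr (-2 * H) \<le> (q + r * k\<^sup>2) * (- (c + b * k)) powr (-2 * H)"
proof -
  define A where "A = b\<^sup>2 * q / r"
  have A: "A > 0" unfolding A_def using b q r by simp
  have eA: "4 * H * (1 - H) * b\<^sup>2 * q / r = 4 * H * (1 - H) * A" unfolding A_def by simp
  define D where "D = sqrt (c\<^sup>2 + 4 * H * (1 - H) * A)"
  define ss where "ss = ((2 * H - 1) * c + D) / (2 * (1 - H))"
  have G1: "ss > 0" unfolding ss_def D_def by (rule opt_g(1)[OF A H])
  have G2: "(A + (c + ss)\<^sup>2) * ss powr (-2 * H) \<le> (A + (c + s)\<^sup>2) * s powr (-2 * H)" if "s > 0" for s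
    unfolding ss_def D_def by (rule opt_g(2)[OF A H that])
  have bK: "b * K = - (c + D) / (2 * (1 - H))"
    unfolding K eA D_def[symmetric] using b H by (simp add: field_simps)
  have sK: "- (c + b * K) = ss"
    unfolding bK ss_def using H by (simp add: field_simps)
  show "c + b * K < 0" using sK G1 by simp
  have key: "q + r * k'\<^sup>2 = (r / b\<^sup>2) * (A + (c + (- (c + b * k')))\<^sup>2)" for k'
    unfolding A_def using b r by (simp add: field_simps power2_eq_square)
  have "(q + r * K\<^sup>2) * (- (c + b * K)) powr (-2 * H) = (r / b\<^sup>2) * ((A + (c + ss)\<^sup>2) * ss powr (-2 * H))"
    unfolding key[of K] sK by simp
  also have "\<dots> \<le> (r / b\<^sup>2) * ((A + (c + (- (c + b * k)))\<^sup>2) * (- (c + b * k)) powr (-2 * H))"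
    using G2[of "- (c + b * k)"] k r b by (intro mult_left_mono) auto
  also have "\<dots> = (q + r * k\<^sup>2) * (- (c + b * k)) powr (-2 * H)"
    unfolding key[of k] by simp
  finally show "(q + r * K\<^sup>2) * (- (c + b * K)) powr (-2 * H) \<le> (q + r * k\<^sup>2) * (- (c + b * k)) powr (-2 * H)" .
qed


lemma LS_add0:
  fixes f g :: "real \<Rightarrow> ennreal"
  assumes ev: "\<And>e. e > 0 \<Longrightarrow> eventually (\<lambda>T. f T \<le> ennreal e) at_top"
  shows "Limsup at_top (\<lambda>T. f T + g T) = Limsup at_top g"
proof (rule antisym)
  show "Limsup at_top g \<le> Limsup at_top (\<lambda>T. f T + g T)"
    by (rule Limsup_mono) (simp add: add_increasing)
  show "Limsup at_top (\<lambda>T. f T + g T) \<le> Limsup at_top g"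
  proof (rule ennreal_le_epsilon)
    fix e :: real assume e: "e > 0"
    have "Limsup at_top (\<lambda>T. f T + g T) \<le> Limsup at_top (\<lambda>T. ennreal e + g T)"
      by (rule Limsup_mono) (rule eventually_mono[OF ev[OF e]], simp add: add_right_mono)
    also have "\<dots> = ennreal e + Limsup at_top g"
      by (rule Limsup_const_add) simp
    finally show "Limsup at_top (\<lambda>T. f T + g T) \<le> Limsup at_top g + ennreal e"
      by (simp add: add.commute)
  qed
qed

lemma filtermap_scale_at_top:
  fixes l :: real assumes l: "l > 0"
  shows "filtermap (\<lambda>T. l * T) at_top = at_top"
proof (rule filtermap_fun_inverse[of "\<lambda>x. x / l"])
  show "filterlim (\<lambda>x. x / l) at_top at_top"
    using filterlim_tendsto_pos_mult_at_top[OF tendsto_const[of "1 / l"] _ filterlim_ident] l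
    by simp
  show "filterlim (\<lambda>T. l * T) at_top at_top"
    using filterlim_tendsto_pos_mult_at_top[OF tendsto_const[of l] l filterlim_ident] by simp
  show "\<forall>\<^sub>F x in at_top. l * (x / l) = x" using l by simp
qed

lemma LS_scale:
  fixes h :: "real \<Rightarrow> ennreal" and l :: real
  assumes l: "l > 0"
  shows "Limsup at_top (\<lambda>T. h (l * T)) = Limsup at_top h"
proof -
  have "inj (\<lambda>T::real. l * T)" using l by (intro injI) simp
  then have "Limsup (filtermap (\<lambda>T. l * T) at_top) h = Limsup at_top (\<lambda>T. h (l * T))"
    by (rule Limsup_filtermap_eq)
  then show ?thesis using filtermap_scale_at_top[OF l] by simp
qed

lemma jm2:
  fixes f :: "real \<Rightarrow> 'w \<Rightarrow> real"
  assumes meas: "\<And>t. t \<ge> 0 \<Longrightarrow> f t \<in> borel_measurable M"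
    and cont: "\<And>\<omega> b. \<omega> \<in> space M \<Longrightarrow> b \<ge> 0 \<Longrightarrow> continuous_on {0..b} (\<lambda>t. f t \<omega>)"
  shows "(\<lambda>(s,\<omega>). f (max 0 s) \<omega>) \<in> borel_measurable (borel \<Otimes>\<^sub>M M)"
proof -
  have j: "(\<lambda>(\<omega>,s). f (max 0 s) \<omega>) \<in> borel_measurable (M \<Otimes>\<^sub>M lborel)" by (rule jm[OF meas cont])
  have "(\<lambda>(\<omega>,s). f (max 0 s) \<omega>) \<circ> (\<lambda>(s,\<omega>). (\<omega>,s)) \<in> borel_measurable (lborel \<Otimes>\<^sub>M M)"
    by (rule measurable_comp[OF measurable_pair_swap' j])
  then have "(\<lambda>(s,\<omega>). f (max 0 s) \<omega>) \<in> borel_measurable (lborel \<Otimes>\<^sub>M M)"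
    by (simp add: comp_def case_prod_beta)
  then show ?thesis
    by (subst measurable_cong_sets[OF sets_pair_measure_cong[OF sets_lborel refl] refl, symmetric])
qed

lemma EZq2_scale:
  assumes P: "prob_space M" and Rs: "rosenblatt_second_order M H R" and Hpos: "0 < H"
    and l: "l > 0" and t: "t \<ge> 0"
  shows "(\<integral>\<omega>. (Zq R (- l) t \<omega>)\<^sup>2 \<partial>M) = l powr (-2 * H) * (\<integral>\<omega>. (Zq R (-1) (l * t) \<omega>)\<^sup>2 \<partial>M)"
proof -
  have Rs': "rosenblatt_second_order M H (\<lambda>s \<omega>. l powr H * R (s / l) \<omega>)" by (rule rosen_scale[OF Rs l])
  have lt: "l * t \<ge> 0" using l t by simp
  have a: "(\<integral>\<omega>. (Zq (\<lambda>s \<omega>. l powr H * R (s / l) \<omega>) (-1) (l * t) \<omega>)\<^sup>2 \<partial>M) = Phi H (ga (-1) (l * t)) (l * t)"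
    by (rule ZqSM(5)[OF P Rs' Hpos lt])
  have b: "(\<integral>\<omega>. (Zq R (-1) (l * t) \<omega>)\<^sup>2 \<partial>M) = Phi H (ga (-1) (l * t)) (l * t)"
    by (rule ZqSM(5)[OF P Rs Hpos lt])
  have c: "(\<integral>\<omega>. (Zq (\<lambda>s \<omega>. l powr H * R (s / l) \<omega>) (-1) (l * t) \<omega>)\<^sup>2 \<partial>M) = (l powr H)\<^sup>2 * (\<integral>\<omega>. (Zq R (- l) t \<omega>)\<^sup>2 \<partial>M)"
    by (simp add: Zq_scale[OF l] power_mult_distrib)
  have d: "l powr (-2 * H) * (l powr H)\<^sup>2 = 1"
  proof -
    have "l powr (-2 * H) * (l powr H)\<^sup>2 = l powr (-2 * H) * l powr (2 * H)"
      by (simp add: power2_eq_square powr_add[symmetric])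
    also have "\<dots> = l powr (-2 * H + 2 * H)" by (rule powr_add[symmetric])
    also have "\<dots> = 1" using l by simp
    finally show ?thesis .
  qed
  have "(\<integral>\<omega>. (Zq R (- l) t \<omega>)\<^sup>2 \<partial>M) = (l powr (-2 * H) * (l powr H)\<^sup>2) * (\<integral>\<omega>. (Zq R (- l) t \<omega>)\<^sup>2 \<partial>M)"
    unfolding d by simp
  also have "\<dots> = l powr (-2 * H) * ((l powr H)\<^sup>2 * (\<integral>\<omega>. (Zq R (- l) t \<omega>)\<^sup>2 \<partial>M))"
    by (rule mult.assoc)
  also have "\<dots> = l powr (-2 * H) * (\<integral>\<omega>. (Zq R (-1) (l * t) \<omega>)\<^sup>2 \<partial>M)"
    using a b c by simp
  finally show ?thesis .
qed

lemma Zq_cont: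
  assumes "continuous_on {0..} (\<lambda>t. R t \<omega>)" "b \<ge> 0"
  shows "continuous_on {0..b} (\<lambda>t. Zq R a t \<omega>)"
  using ode_exist(1)[OF assms, of a 0] by (simp add: Zq_def)

definition E1 :: "'w measure \<Rightarrow> (real \<Rightarrow> 'w \<Rightarrow> real) \<Rightarrow> real \<Rightarrow> ennreal" where
  "E1 M R u = (\<integral>\<^sup>+\<omega>. ennreal ((Zq R (-1) (max 0 u) \<omega>)\<^sup>2) \<partial>M)"

definition V :: "'w measure \<Rightarrow> (real \<Rightarrow> 'w \<Rightarrow> real) \<Rightarrow> real \<Rightarrow> ennreal" where
  "V M R S = ennreal (1 / S) * (\<integral>\<^sup>+u. E1 M R u * indicator {0..S} u \<partial>lborel)"

lemma E1_meas:
  assumes P: "prob_space M" and Rs: "rosenblatt_second_order M H R" and Hpos: "0 < H"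
  shows "E1 M R \<in> borel_measurable borel"
proof -
  interpret prob_space M by (rule P)
  have J[measurable]: "(\<lambda>(s, \<omega>). Zq R (-1) (max 0 s) \<omega>) \<in> borel_measurable (borel \<Otimes>\<^sub>M M)"
    by (rule jm2) (auto intro: ZqSM(1)[OF P Rs Hpos] Zq_cont R_cont[OF P Rs])
  have e: "E1 M R = (\<lambda>u. \<integral>\<^sup>+\<omega>. ennreal ((Zq R (-1) (max 0 u) \<omega>)\<^sup>2) \<partial>M)"
    by (simp add: E1_def fun_eq_iff)
  show ?thesis unfolding e by (rule borel_measurable_nn_integral) measurable
qed

lemma exp_int_bound:
  fixes a Q x0 T :: real
  assumes a: "a < 0" and Q: "Q \<ge> 0" and T: "T \<ge> 0"
  shows "(\<integral>\<^sup>+t. ennreal (Q * (exp (a * t) * x0)\<^sup>2) * indicator {0..T} t \<partial>lborel) \<le> ennreal (Q * x0\<^sup>2 / (- 2 * a))"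
proof -
  define f where "f = (\<lambda>t. Q * (exp (a * t) * x0)\<^sup>2)"
  have fc: "continuous_on {0..T} f" unfolding f_def by (intro continuous_intros)
  have fe: "f t = Q * x0\<^sup>2 * exp (2 * a * t)" for t
  proof -
    have "2 * a * t = a * t + a * t" by simp
    then have "exp (2 * a * t) = exp (a * t) * exp (a * t)" by (simp only: exp_add)
    then show ?thesis unfolding f_def by (simp add: power2_eq_square)
  qed
  have intf: "integrable lborel (\<lambda>t. indicator {0..T} t * f t)"
    using borel_integrable_atLeastAtMost'[OF fc] unfolding set_integrable_def by simp
  have "(\<integral>\<^sup>+t. ennreal (Q * (exp (a * t) * x0)\<^sup>2) * indicator {0..T} t \<partial>lborel) = (\<integral>\<^sup>+t. ennreal (indicator {0..T} t * f t) \<partial>lborel)"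
    by (intro nn_integral_cong) (simp add: f_def split: split_indicator)
  also have "\<dots> = ennreal (\<integral>t. indicator {0..T} t * f t \<partial>lborel)"
    by (rule nn_integral_eq_integral[OF intf]) (simp add: f_def Q)
  also have "(\<integral>t. indicator {0..T} t * f t \<partial>lborel) = integral {0..T} f"
    using LI_HK[OF fc] unfolding LI_def .
  also have "integral {0..T} f = Q * x0\<^sup>2 * exp (2 * a * T) / (2 * a) - Q * x0\<^sup>2 / (2 * a)"
  proof -
    have "(f has_integral ((\<lambda>t. Q * x0\<^sup>2 * exp (2 * a * t) / (2 * a)) T - (\<lambda>t. Q * x0\<^sup>2 * exp (2 * a * t) / (2 * a)) 0)) {0..T}"
    proof (rule fundamental_theorem_of_calculus[OF T])
      fix t assume "t \<in> {0..T}"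
      have "((\<lambda>t. Q * x0\<^sup>2 * exp (2 * a * t) / (2 * a)) has_real_derivative (Q * x0\<^sup>2 * (exp (2 * a * t) * (2 * a)) / (2 * a))) (at t within {0..T})"
        by (auto intro!: derivative_eq_intros)
      moreover have "Q * x0\<^sup>2 * (exp (2 * a * t) * (2 * a)) / (2 * a) = f t" using a by (simp add: fe)
      ultimately show "((\<lambda>t. Q * x0\<^sup>2 * exp (2 * a * t) / (2 * a)) has_vector_derivative f t) (at t within {0..T})"
        by (simp add: has_real_derivative_iff_has_vector_derivative)
    qed
    then show ?thesis by (simp add: integral_unique)
  qed
  also have "\<dots> \<le> Q * x0\<^sup>2 / (- 2 * a)"
  proof -
    have "Q * x0\<^sup>2 * exp (2 * a * T) / (2 * a) \<le> 0"
      using a Q by (intro divide_nonneg_neg mult_nonneg_nonneg) auto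
    moreover have "Q * x0\<^sup>2 / (2 * a) = - (Q * x0\<^sup>2 / (- 2 * a))" by simp
    ultimately show ?thesis by linarith
  qed
  finally show ?thesis by (simp add: ennreal_leI)
qed


context
  fixes M :: "'w measure" and H :: real and R :: "real \<Rightarrow> 'w \<Rightarrow> real"
  assumes P: "prob_space M" and Rs: "rosenblatt_second_order M H R" and Hpos: "0 < H"
begin

lemma CL:
  fixes x :: "real \<Rightarrow> 'w \<Rightarrow> real" and a Q x0 :: real
  assumes a: "a < 0" and Q: "Q \<ge> 0"
    and sol: "\<And>\<omega> t. \<omega> \<in> space M \<Longrightarrow> t \<ge> 0 \<Longrightarrow>
       (\<lambda>s. x s \<omega>) integrable_on {0..t} \<and> x t \<omega> = x0 + integral {0..t} (\<lambda>s. a * x s \<omega>) + R t \<omega>"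
  shows "Limsup at_top (\<lambda>T. ennreal (1 / T) * (\<integral>\<^sup>+\<omega>. (\<integral>\<^sup>+t\<in>{0..T}. ennreal (Q * (x t \<omega>)\<^sup>2) \<partial>lborel) \<partial>M))
       = Limsup at_top (\<lambda>S. ennreal (Q * (- a) powr (-2 * H)) * V M R S)"
proof -
  interpret prob_space M by (rule P)
  interpret PS: pair_sigma_finite M lborel
    by (simp add: lborel.sigma_finite_measure_axioms pair_sigma_finite.intro sigma_finite_measure_axioms)
  define l where "l = - a"
  have l: "l > 0" using a by (simp add: l_def)
  have al: "a = - l" by (simp add: l_def)
  have xr: "x t \<omega> = exp (a * t) * x0 + Zq R a t \<omega>" if \<omega>: "\<omega> \<in> space M" and t: "t \<ge> 0" for \<omega> t
  proof -
    have "x t \<omega> = exp (a * t) * x0 + R t \<omega> + a * exp (a * t) * integral {0..t} (\<lambda>s. exp (- (a * s)) * R s \<omega>)"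
      by (rule ode_unique[OF R_cont[OF P Rs \<omega>] _ t]) (rule sol[OF \<omega>])
    then show ?thesis by (simp add: Zq_def)
  qed
  have xm: "x t \<in> borel_measurable M" if t: "t \<ge> 0" for t
  proof -
    have "(\<lambda>\<omega>. exp (a * t) * x0 + Zq R a t \<omega>) \<in> borel_measurable M"
      using ZqSM(1)[OF P Rs Hpos t, of a] by simp
    moreover have "x t \<in> borel_measurable M \<longleftrightarrow> (\<lambda>\<omega>. exp (a * t) * x0 + Zq R a t \<omega>) \<in> borel_measurable M"
      by (rule measurable_cong) (simp add: xr t)
    ultimately show ?thesis by simp
  qed
  have xc: "continuous_on {0..b} (\<lambda>t. x t \<omega>)" if \<omega>: "\<omega> \<in> space M" and b: "b \<ge> 0" for \<omega> b
  proof -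
    have "continuous_on {0..b} (\<lambda>t. exp (a * t) * x0 + Zq R a t \<omega>)"
      by (intro continuous_intros Zq_cont[of R \<omega>, OF R_cont[OF P Rs \<omega>] b])
    then show ?thesis by (rule continuous_on_eq) (simp add: xr \<omega>)
  qed
  have XJ[measurable]: "(\<lambda>(\<omega>,s). x (max 0 s) \<omega>) \<in> borel_measurable (M \<Otimes>\<^sub>M lborel)"
    by (rule jm[OF xm xc])
  have E1m[measurable]: "E1 M R \<in> borel_measurable borel" by (rule E1_meas[OF P Rs Hpos])
  define C where "C = Q * l powr (-2 * H)"
  have C0: "C \<ge> 0" unfolding C_def using Q by simp
  have inner: "(\<integral>\<^sup>+\<omega>. ennreal (Q * (x t \<omega>)\<^sup>2) \<partial>M) = ennreal (Q * (exp (a * t) * x0)\<^sup>2) + ennreal C * E1 M R (l * t)"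
    if t: "t \<ge> 0" for t
  proof -
    define e where "e = exp (a * t) * x0"
    define Z where "Z = Zq R a t"
    note Zs = ZqSM[OF P Rs Hpos t, of a, folded Z_def]
    have Zm[measurable]: "Z \<in> borel_measurable M" by (rule Zs(1))
    have sq: "Q * (e + Z \<omega>)\<^sup>2 = Q * e\<^sup>2 + (2 * Q * e) * Z \<omega> + Q * (Z \<omega>)\<^sup>2" for \<omega>
      by (simp add: power2_eq_square algebra_simps)
    have iZ: "integrable M (\<lambda>\<omega>. Q * e\<^sup>2 + (2 * Q * e) * Z \<omega> + Q * (Z \<omega>)\<^sup>2)"
      using Zs(2,3) by simp
    have i1: "integrable M (\<lambda>\<omega>. Q * (e + Z \<omega>)\<^sup>2)" using iZ by (simp only: sq)
    have EZ: "(\<integral>\<omega>. Q * (e + Z \<omega>)\<^sup>2 \<partial>M) = Q * e\<^sup>2 + Q * (\<integral>\<omega>. (Z \<omega>)\<^sup>2 \<partial>M)"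
    proof -
      have "(\<integral>\<omega>. Q * (e + Z \<omega>)\<^sup>2 \<partial>M) = (\<integral>\<omega>. Q * e\<^sup>2 + (2 * Q * e) * Z \<omega> + Q * (Z \<omega>)\<^sup>2 \<partial>M)"
        by (simp only: sq)
      also have "\<dots> = Q * e\<^sup>2 + (2 * Q * e) * (\<integral>\<omega>. Z \<omega> \<partial>M) + Q * (\<integral>\<omega>. (Z \<omega>)\<^sup>2 \<partial>M)"
        using Zs(2,3) by (simp add: prob_space)
      finally show ?thesis using Zs(4) by simp
    qed
    have lt: "l * t \<ge> 0" using l t by simp
    have Ez: "(\<integral>\<omega>. (Z \<omega>)\<^sup>2 \<partial>M) = l powr (-2 * H) * (\<integral>\<omega>. (Zq R (-1) (l * t) \<omega>)\<^sup>2 \<partial>M)"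
      unfolding Z_def al by (rule EZq2_scale[OF P Rs Hpos l t])
    have E1e: "E1 M R (l * t) = ennreal (\<integral>\<omega>. (Zq R (-1) (l * t) \<omega>)\<^sup>2 \<partial>M)"
      unfolding E1_def using lt
      by (simp add: nn_integral_eq_integral[OF ZqSM(2)[OF P Rs Hpos lt]])
    have nn1: "0 \<le> (\<integral>\<omega>. (Zq R (-1) (l * t) \<omega>)\<^sup>2 \<partial>M)" by simp
    have "(\<integral>\<^sup>+\<omega>. ennreal (Q * (x t \<omega>)\<^sup>2) \<partial>M) = (\<integral>\<^sup>+\<omega>. ennreal (Q * (e + Z \<omega>)\<^sup>2) \<partial>M)"
      by (rule nn_integral_cong) (simp add: xr t e_def Z_def)
    also have "\<dots> = ennreal (\<integral>\<omega>. Q * (e + Z \<omega>)\<^sup>2 \<partial>M)"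
      by (rule nn_integral_eq_integral[OF i1]) (simp add: Q)
    also have "\<dots> = ennreal (Q * e\<^sup>2 + C * (\<integral>\<omega>. (Zq R (-1) (l * t) \<omega>)\<^sup>2 \<partial>M))"
      unfolding EZ Ez C_def by (simp add: ac_simps)
    also have "\<dots> = ennreal (Q * e\<^sup>2) + ennreal C * E1 M R (l * t)"
      unfolding E1e using Q C0 nn1 by (simp add: ennreal_plus ennreal_mult)
    finally show ?thesis unfolding e_def .
  qed
  have main_eq: "ennreal (1 / T) * (\<integral>\<^sup>+\<omega>. (\<integral>\<^sup>+t\<in>{0..T}. ennreal (Q * (x t \<omega>)\<^sup>2) \<partial>lborel) \<partial>M)
      = ennreal (1 / T) * (\<integral>\<^sup>+t. ennreal (Q * (exp (a * t) * x0)\<^sup>2) * indicator {0..T} t \<partial>lborel) + ennreal C * V M R (l * T)"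
    if T: "T > 0" for T
  proof -
    have "(\<integral>\<^sup>+\<omega>. (\<integral>\<^sup>+t\<in>{0..T}. ennreal (Q * (x t \<omega>)\<^sup>2) \<partial>lborel) \<partial>M)
        = (\<integral>\<^sup>+\<omega>. (\<integral>\<^sup>+t. ennreal (Q * (x (max 0 t) \<omega>)\<^sup>2) * indicator {0..T} t \<partial>lborel) \<partial>M)"
      by (intro nn_integral_cong) (simp split: split_indicator)
    also have "\<dots> = (\<integral>\<^sup>+t. (\<integral>\<^sup>+\<omega>. ennreal (Q * (x (max 0 t) \<omega>)\<^sup>2) * indicator {0..T} t \<partial>M) \<partial>lborel)"
      by (rule PS.Fubini'[symmetric]) measurable
    also have "\<dots> = (\<integral>\<^sup>+t. (ennreal (Q * (exp (a * t) * x0)\<^sup>2) + ennreal C * E1 M R (l * t)) * indicator {0..T} t \<partial>lborel)"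
    proof (rule nn_integral_cong)
      fix t :: real
      show "(\<integral>\<^sup>+\<omega>. ennreal (Q * (x (max 0 t) \<omega>)\<^sup>2) * indicator {0..T} t \<partial>M)
          = (ennreal (Q * (exp (a * t) * x0)\<^sup>2) + ennreal C * E1 M R (l * t)) * indicator {0..T} t"
      proof (cases "t \<in> {0..T}")
        case True
        then have "max 0 t = t" "t \<ge> 0" by auto
        then show ?thesis using True inner[of t] by simp
      next
        case False then show ?thesis by simp
      qed
    qed
    also have "\<dots> = (\<integral>\<^sup>+t. ennreal (Q * (exp (a * t) * x0)\<^sup>2) * indicator {0..T} t \<partial>lborel)
        + ennreal C * (\<integral>\<^sup>+t. E1 M R (l * t) * indicator {0..T} t \<partial>lborel)"
    proof -
      have "(\<integral>\<^sup>+t. (ennreal (Q * (exp (a * t) * x0)\<^sup>2) + ennreal C * E1 M R (l * t)) * indicator {0..T} t \<partial>lborel)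
          = (\<integral>\<^sup>+t. ennreal (Q * (exp (a * t) * x0)\<^sup>2) * indicator {0..T} t + ennreal C * (E1 M R (l * t) * indicator {0..T} t) \<partial>lborel)"
        by (simp add: distrib_right mult.assoc)
      also have "\<dots> = (\<integral>\<^sup>+t. ennreal (Q * (exp (a * t) * x0)\<^sup>2) * indicator {0..T} t \<partial>lborel)
          + (\<integral>\<^sup>+t. ennreal C * (E1 M R (l * t) * indicator {0..T} t) \<partial>lborel)"
        by (rule nn_integral_add) measurable
      also have "(\<integral>\<^sup>+t. ennreal C * (E1 M R (l * t) * indicator {0..T} t) \<partial>lborel)
          = ennreal C * (\<integral>\<^sup>+t. E1 M R (l * t) * indicator {0..T} t \<partial>lborel)"
        by (rule nn_integral_cmult) measurable
      finally show ?thesis .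
    qed
    also have "(\<integral>\<^sup>+t. E1 M R (l * t) * indicator {0..T} t \<partial>lborel)
        = ennreal (1 / l) * (\<integral>\<^sup>+u. E1 M R u * indicator {0..l * T} u \<partial>lborel)"
    proof -
      have "(\<integral>\<^sup>+u. E1 M R u * indicator {0..l * T} u \<partial>lborel)
          = ennreal \<bar>l\<bar> * (\<integral>\<^sup>+x. E1 M R (0 + l * x) * indicator {0..l * T} (0 + l * x) \<partial>lborel)"
        by (rule nn_integral_real_affine) (measurable, use l in simp)
      also have "(\<lambda>x. E1 M R (0 + l * x) * indicator {0..l * T} (0 + l * x)) = (\<lambda>x. E1 M R (l * x) * indicator {0..T} x)"
        using l by (auto simp: fun_eq_iff split: split_indicator simp: zero_le_mult_iff)
      finally have "(\<integral>\<^sup>+u. E1 M R u * indicator {0..l * T} u \<partial>lborel) = ennreal l * (\<integral>\<^sup>+t. E1 M R (l * t) * indicator {0..T} t \<partial>lborel)"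
        using l by simp
      then have "ennreal (1 / l) * (\<integral>\<^sup>+u. E1 M R u * indicator {0..l * T} u \<partial>lborel)
          = (ennreal (1 / l) * ennreal l) * (\<integral>\<^sup>+t. E1 M R (l * t) * indicator {0..T} t \<partial>lborel)"
        by (simp add: mult.assoc)
      also have "ennreal (1 / l) * ennreal l = 1"
        using l by (simp add: ennreal_mult[symmetric])
      finally show ?thesis by simp
    qed
    finally have eq: "(\<integral>\<^sup>+\<omega>. (\<integral>\<^sup>+t\<in>{0..T}. ennreal (Q * (x t \<omega>)\<^sup>2) \<partial>lborel) \<partial>M)
        = (\<integral>\<^sup>+t. ennreal (Q * (exp (a * t) * x0)\<^sup>2) * indicator {0..T} t \<partial>lborel)
          + ennreal C * (ennreal (1 / l) * (\<integral>\<^sup>+u. E1 M R u * indicator {0..l * T} u \<partial>lborel))" .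
    have m: "ennreal (1 / T) * ennreal (1 / l) = ennreal (1 / (l * T))"
      using l T by (simp add: ennreal_mult[symmetric])
    have r: "ennreal (1 / T) * (ennreal C * (ennreal (1 / l) * N)) = ennreal C * ((ennreal (1 / T) * ennreal (1 / l)) * N)" for N
      by (simp only: ac_simps)
    show ?thesis unfolding eq V_def distrib_left r m by (simp only: mult.commute[of l T])
  qed
  have ev: "eventually (\<lambda>T. ennreal (1 / T) * (\<integral>\<^sup>+t. ennreal (Q * (exp (a * t) * x0)\<^sup>2) * indicator {0..T} t \<partial>lborel) \<le> ennreal e) at_top"
    if e: "e > 0" for e
  proof -
    define K0 where "K0 = Q * x0\<^sup>2 / (- 2 * a)"
    have a2: "- 2 * a > 0" using a by simp
    have K0: "K0 \<ge> 0" unfolding K0_def by (rule divide_nonneg_pos[OF _ a2]) (use Q in simp)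
    have "eventually (\<lambda>T. T > K0 / e + 1) at_top" by (rule eventually_gt_at_top)
    then show ?thesis
    proof (rule eventually_mono)
      fix T assume T: "T > K0 / e + 1"
      have Tp: "T > 0" using T K0 e by (smt (verit) divide_nonneg_pos)
      have "ennreal (1 / T) * (\<integral>\<^sup>+t. ennreal (Q * (exp (a * t) * x0)\<^sup>2) * indicator {0..T} t \<partial>lborel) \<le> ennreal (1 / T) * ennreal K0"
        unfolding K0_def by (intro mult_left_mono exp_int_bound a Q) (use Tp in auto)
      also have "\<dots> = ennreal (1 / T * K0)" using ennreal_mult[of "1 / T" K0] Tp K0 by simp
      also have "1 / T * K0 = K0 / T" by simp
      also have "\<dots> \<le> ennreal e"
      proof (rule ennreal_leI)
        have "K0 < e * T" using T e by (simp add: field_simps)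
        then show "K0 / T \<le> e" using Tp by (simp add: divide_le_eq)
      qed
      finally show "ennreal (1 / T) * (\<integral>\<^sup>+t. ennreal (Q * (exp (a * t) * x0)\<^sup>2) * indicator {0..T} t \<partial>lborel) \<le> ennreal e" .
    qed
  qed
  have "Limsup at_top (\<lambda>T. ennreal (1 / T) * (\<integral>\<^sup>+\<omega>. (\<integral>\<^sup>+t\<in>{0..T}. ennreal (Q * (x t \<omega>)\<^sup>2) \<partial>lborel) \<partial>M))
      = Limsup at_top (\<lambda>T. ennreal (1 / T) * (\<integral>\<^sup>+t. ennreal (Q * (exp (a * t) * x0)\<^sup>2) * indicator {0..T} t \<partial>lborel) + ennreal C * V M R (l * T))"
    by (rule Limsup_eq) (rule eventually_mono[OF eventually_gt_at_top[of 0]], rule main_eq)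
  also have "\<dots> = Limsup at_top (\<lambda>T. ennreal C * V M R (l * T))"
    by (rule LS_add0) (rule ev)
  also have "\<dots> = Limsup at_top (\<lambda>S. ennreal C * V M R S)"
    by (rule LS_scale[OF l, of "\<lambda>S. ennreal C * V M R S"])
  finally show ?thesis unfolding C_def l_def .
qed

end


lemma lin_sum: "b1 * y + (\<Sum>j\<in>I. b2 j * (K' j * y)) = (b1 + (\<Sum>j\<in>I. b2 j * K' j)) * (y::real)"
  by (simp add: sum_distrib_right distrib_right mult.assoc)

lemma ss_iff: "state_solution M R I b1 b2 x0 K' x \<longleftrightarrow>
  (\<forall>\<omega>\<in>space M. \<forall>t\<ge>0. (\<lambda>s. x s \<omega>) integrable_on {0..t} \<and>
     x t \<omega> = x0 + integral {0..t} (\<lambda>s. (b1 + (\<Sum>j\<in>I. b2 j * K' j)) * x s \<omega>) + R t \<omega>)"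
  unfolding state_solution_def lin_sum ..

theorem mainTheorem4:
  fixes M :: "'w measure" and R :: "real \<Rightarrow> 'w \<Rightarrow> real"
    and I :: "'i set" and H b1 x0 :: real and b2 q r K :: "'i \<Rightarrow> real"
  assumes "prob_space M"
    and "rosenblatt_second_order M H R"
    and "1/2 < H" and "H < 1"
    and "finite I"
    and "\<forall>j\<in>I. b2 j \<noteq> 0 \<and> q j > 0 \<and> r j > 0"
    and "\<forall>i\<in>I. K i = - (b1 + (\<Sum>j\<in>I - {i}. b2 j * K j)
              + sqrt ((b1 + (\<Sum>j\<in>I - {i}. b2 j * K j))\<^sup>2 + 4 * H * (1 - H) * (b2 i)\<^sup>2 * q i / r i))
              / (2 * b2 i * (1 - H))"
    and "b1 + (\<Sum>j\<in>I. b2 j * K j) < 0"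
  shows "linear_feedback_equilibrium M R I b1 b2 x0 q r K"
proof -
  note P = assms(1) and Rs = assms(2) and fin = assms(5) and par = assms(6) and Keq = assms(7) and adm = assms(8)
  have Hpos: "0 < H" using assms(3) by simp
  have H1: "H < 1" by (rule assms(4))
  define aK where "aK = b1 + (\<Sum>j\<in>I. b2 j * K j)"
  have ex: "\<exists>x. state_solution M R I b1 b2 x0 K x"
  proof
    define x where "x = (\<lambda>t \<omega>. exp (aK * t) * x0 + Zq R aK t \<omega>)"
    show "state_solution M R I b1 b2 x0 K x"
      unfolding ss_iff aK_def[symmetric]
    proof (intro ballI allI impI)
      fix \<omega> t assume \<omega>: "\<omega> \<in> space M" and t: "(t::real) \<ge> 0"
      define f where "f = (\<lambda>t. exp (aK * t) * x0 + R t \<omega> + aK * exp (aK * t) * integral {0..t} (\<lambda>s. exp (- (aK * s)) * R s \<omega>))"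
      note OE = ode_exist[OF R_cont[OF P Rs \<omega>] t, of aK x0]
      have OE2: "f integrable_on {0..t}" unfolding f_def by (rule OE(2))
      have OE3: "f t = x0 + integral {0..t} (\<lambda>s. aK * f s) + R t \<omega>" unfolding f_def by (rule OE(3))
      have xf: "\<And>s. x s \<omega> = f s" by (simp add: x_def f_def Zq_def)
      show "(\<lambda>s. x s \<omega>) integrable_on {0..t} \<and> x t \<omega> = x0 + integral {0..t} (\<lambda>s. aK * x s \<omega>) + R t \<omega>"
        unfolding xf using OE2 OE3 by simp
    qed
  qed
  have cmp: "avg_cost M q r i K x \<le> avg_cost M q r i (K(i := k)) y"
    if i: "i \<in> I" and admk: "admissible_gains I b1 b2 (K(i := k))"
      and sx: "state_solution M R I b1 b2 x0 K x" and sy: "state_solution M R I b1 b2 x0 (K(i := k)) y"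
    for i k x y
  proof -
    define c where "c = b1 + (\<Sum>j\<in>I - {i}. b2 j * K j)"
    have sK: "(\<Sum>j\<in>I. b2 j * K j) = b2 i * K i + (\<Sum>j\<in>I - {i}. b2 j * K j)"
      by (rule sum.remove[OF fin i])
    have sK': "(\<Sum>j\<in>I. b2 j * (K(i := k)) j) = b2 i * k + (\<Sum>j\<in>I - {i}. b2 j * K j)"
    proof -
      have "(\<Sum>j\<in>I. b2 j * (K(i := k)) j) = b2 i * (K(i := k)) i + (\<Sum>j\<in>I - {i}. b2 j * (K(i := k)) j)"
        by (rule sum.remove[OF fin i])
      also have "(\<Sum>j\<in>I - {i}. b2 j * (K(i := k)) j) = (\<Sum>j\<in>I - {i}. b2 j * K j)"
        by (rule sum.cong) auto
      finally show ?thesis by simp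
    qed
    have aK: "b1 + (\<Sum>j\<in>I. b2 j * K j) = c + b2 i * K i" unfolding sK c_def by simp
    have aK': "b1 + (\<Sum>j\<in>I. b2 j * (K(i := k)) j) = c + b2 i * k" unfolding sK' c_def by simp
    have b: "b2 i \<noteq> 0" and qi: "q i > 0" and ri: "r i > 0" using par i by auto
    have Ki: "K i = - (c + sqrt (c\<^sup>2 + 4 * H * (1 - H) * (b2 i)\<^sup>2 * q i / r i)) / (2 * b2 i * (1 - H))"
      using Keq i unfolding c_def by blast
    have kneg: "c + b2 i * k < 0" using admk unfolding admissible_gains_def aK' .
    have Kneg: "c + b2 i * K i < 0" using adm unfolding aK .
    note O = opt[OF b qi ri Hpos H1 Ki kneg]
    have costeq: "avg_cost M q r i K' z = Limsup at_top (\<lambda>T. ennreal (1 / T) *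
        (\<integral>\<^sup>+\<omega>. (\<integral>\<^sup>+t\<in>{0..T}. ennreal ((q i + r i * (K' i)\<^sup>2) * (z t \<omega>)\<^sup>2) \<partial>lborel) \<partial>M))" for K' z
    proof -
      have e: "q i * w\<^sup>2 + r i * (K' i * w)\<^sup>2 = (q i + r i * (K' i)\<^sup>2) * w\<^sup>2" for w :: real
        by (simp add: power_mult_distrib algebra_simps)
      show ?thesis unfolding avg_cost_def e ..
    qed
    have solx: "\<And>\<omega> t. \<omega> \<in> space M \<Longrightarrow> t \<ge> 0 \<Longrightarrow> (\<lambda>s. x s \<omega>) integrable_on {0..t} \<and>
        x t \<omega> = x0 + integral {0..t} (\<lambda>s. (c + b2 i * K i) * x s \<omega>) + R t \<omega>"
      using sx unfolding ss_iff aK by blast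
    have soly: "\<And>\<omega> t. \<omega> \<in> space M \<Longrightarrow> t \<ge> 0 \<Longrightarrow> (\<lambda>s. y s \<omega>) integrable_on {0..t} \<and>
        y t \<omega> = x0 + integral {0..t} (\<lambda>s. (c + b2 i * k) * y s \<omega>) + R t \<omega>"
      using sy unfolding ss_iff aK' by blast
    have Q1: "q i + r i * (K i)\<^sup>2 \<ge> 0" using qi ri by (simp add: add_nonneg_nonneg)
    have Q2: "q i + r i * k\<^sup>2 \<ge> 0" using qi ri by (simp add: add_nonneg_nonneg)
    have cx: "avg_cost M q r i K x = Limsup at_top (\<lambda>S. ennreal ((q i + r i * (K i)\<^sup>2) * (- (c + b2 i * K i)) powr (-2 * H)) * V M R S)"
      unfolding costeq by (rule CL[OF P Rs Hpos Kneg Q1 solx])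
    have cy: "avg_cost M q r i (K(i := k)) y = Limsup at_top (\<lambda>S. ennreal ((q i + r i * k\<^sup>2) * (- (c + b2 i * k)) powr (-2 * H)) * V M R S)"
      unfolding costeq fun_upd_same by (rule CL[OF P Rs Hpos kneg Q2 soly])
    show ?thesis unfolding cx cy
      by (rule Limsup_mono, rule always_eventually, intro allI mult_right_mono ennreal_leI O(2)) simp
  qed
  show ?thesis
    unfolding linear_feedback_equilibrium_def
    using adm ex cmp unfolding admissible_gains_def by blast
qed

end
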